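(* Let $(\Omega,\mathcal{F},P)$ be an adequate probability space. A functional $I:B_0(\Omega,\mathcal{F})\to\mathbb{R}$ is strongly monotone, constant-additive, positively homogeneous, and additive in concordant sums if and only if there exists $\beta>-1$ such that $I=\mathbb{E}_\beta$.
   Context: Adequate: $P$ nonatomic or $\mathcal{F}$ generated by a finite partition over which $P$ is uniform. $B_0(\Omega,\mathcal{F})$: $\mathcal{F}$-measurable real functions with finitely many values. $\mathbb{E}_\beta[X]$ is the unique $v$ with $\mathbb{E}[(X-v)^+]=(1+\beta)\mathbb{E}[(v-X)^+]$. Strongly monotone: if $P(X\ge t)\ge P(Y\ge t)$ for all $t\in\mathbb{R}$ then $I(X)\ge I(Y)$, strictly if strict for some $t$. Constant-additive: $I(X+m)=I(X)+m$ for $m\in\mathbb{R}$. Positively homogeneous: $I(\lambda X)=\lambda I(X)$ for $\lambda\ge0$. Additive in concordant sums: if $\{\omega:X(\omega)<I(X)\}=\{\omega:Y(\omega)<I(Y)\}$ then $I(X+Y)=I(X)+I(Y)$. *)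

theory Defs
  imports "HOL-Probability.Probability"
begin

definition nonatomic :: "'a measure \<Rightarrow> bool" where
  "nonatomic M \<longleftrightarrow> (\<forall>A\<in>sets M. measure M A > 0 \<longrightarrow>
      (\<exists>B\<in>sets M. B \<subseteq> A \<and> 0 < measure M B \<and> measure M B < measure M A))"

definition finite_uniform :: "'a measure \<Rightarrow> bool" where
  "finite_uniform M \<longleftrightarrow> (\<exists>Q. finite Q \<and> partition_on (space M) Q \<and>
      sets M = sigma_sets (space M) Q \<and>
      (\<forall>B\<in>Q. measure M B = 1 / real (card Q)))"

definition adequate :: "'a measure \<Rightarrow> bool" where
  "adequate M \<longleftrightarrow> nonatomic M \<or> finite_uniform M"

definition B0 :: "'a measure \<Rightarrow> ('a \<Rightarrow> real) set" where
  "B0 M = {X. X \<in> borel_measurable M \<and> finite (X ` space M)}"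

definition E_beta :: "'a measure \<Rightarrow> real \<Rightarrow> ('a \<Rightarrow> real) \<Rightarrow> real" where
  "E_beta M \<beta> X = (THE v. (\<integral>\<omega>. max (X \<omega> - v) 0 \<partial>M) =
                          (1 + \<beta>) * (\<integral>\<omega>. max (v - X \<omega>) 0 \<partial>M))"

definition strongly_monotone :: "'a measure \<Rightarrow> (('a \<Rightarrow> real) \<Rightarrow> real) \<Rightarrow> bool" where
  "strongly_monotone M I \<longleftrightarrow> (\<forall>X\<in>B0 M. \<forall>Y\<in>B0 M.
     (\<forall>t. measure M {\<omega>\<in>space M. X \<omega> \<ge> t} \<ge> measure M {\<omega>\<in>space M. Y \<omega> \<ge> t}) \<longrightarrow>
       (I X \<ge> I Y \<and>
        ((\<exists>t. measure M {\<omega>\<in>space M. X \<omega> \<ge> t} > measure M {\<omega>\<in>space M. Y \<omega> \<ge> t})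
           \<longrightarrow> I X > I Y)))"

definition constant_additive :: "'a measure \<Rightarrow> (('a \<Rightarrow> real) \<Rightarrow> real) \<Rightarrow> bool" where
  "constant_additive M I \<longleftrightarrow> (\<forall>X\<in>B0 M. \<forall>m::real. I (\<lambda>\<omega>. X \<omega> + m) = I X + m)"

definition positively_homogeneous :: "'a measure \<Rightarrow> (('a \<Rightarrow> real) \<Rightarrow> real) \<Rightarrow> bool" where
  "positively_homogeneous M I \<longleftrightarrow>
     (\<forall>X\<in>B0 M. \<forall>c::real. c \<ge> 0 \<longrightarrow> I (\<lambda>\<omega>. c * X \<omega>) = c * I X)"

definition concordant_additive :: "'a measure \<Rightarrow> (('a \<Rightarrow> real) \<Rightarrow> real) \<Rightarrow> bool" where
  "concordant_additive M I \<longleftrightarrow> (\<forall>X\<in>B0 M. \<forall>Y\<in>B0 M.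
     {\<omega>\<in>space M. X \<omega> < I X} = {\<omega>\<in>space M. Y \<omega> < I Y} \<longrightarrow>
       I (\<lambda>\<omega>. X \<omega> + Y \<omega>) = I X + I Y)"

end

theory Submission
  imports Defs
begin


context prob_space
begin

lemma B0_meas: "X \<in> B0 M \<Longrightarrow> X \<in> borel_measurable M"
  by (simp add: B0_def)

lemma B0_fin: "X \<in> B0 M \<Longrightarrow> finite (X ` space M)"
  by (simp add: B0_def)

lemma B0_I: "X \<in> borel_measurable M \<Longrightarrow> finite (X ` space M) \<Longrightarrow> X \<in> B0 M"
  by (simp add: B0_def)

lemma sum_single_ind:
  fixes F :: "'b \<Rightarrow> real"
  assumes "finite S" "a \<in> S"
  shows "(\<Sum>p\<in>S. F p * (if a = p then 1 else 0)) = F a"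
proof -
  have "(\<Sum>p\<in>S. F p * (if a = p then 1 else 0)) = (\<Sum>p\<in>S. if a = p then F p else 0)"
    by (intro sum.cong) auto
  also have "\<dots> = F a" using assms by simp
  finally show ?thesis .
qed

lemma B0_comp2_repr:
  fixes f :: "real \<Rightarrow> real \<Rightarrow> real"
  assumes "X \<in> B0 M" "Y \<in> B0 M" "\<omega> \<in> space M"
  shows "f (X \<omega>) (Y \<omega>) = (\<Sum>p\<in>X ` space M \<times> Y ` space M.
           f (fst p) (snd p) * indicator {\<omega>\<in>space M. X \<omega> = fst p \<and> Y \<omega> = snd p} \<omega>)"
proof -
  have "(\<Sum>p\<in>X ` space M \<times> Y ` space M.
           f (fst p) (snd p) * indicator {\<omega>\<in>space M. X \<omega> = fst p \<and> Y \<omega> = snd p} \<omega>)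
      = (\<Sum>p\<in>X ` space M \<times> Y ` space M. f (fst p) (snd p) * (if (X \<omega>, Y \<omega>) = p then 1 else 0))"
    using assms(3) by (intro sum.cong refl) (auto simp: indicator_def)
  also have "\<dots> = f (X \<omega>) (Y \<omega>)"
    using assms sum_single_ind[of "X ` space M \<times> Y ` space M" "(X \<omega>, Y \<omega>)" "\<lambda>p. f (fst p) (snd p)"]
    by (simp add: B0_fin)
  finally show ?thesis by simp
qed

lemma B0_comp2:
  assumes "X \<in> B0 M" "Y \<in> B0 M"
  shows "(\<lambda>\<omega>. f (X \<omega>) (Y \<omega>)) \<in> B0 M"
proof (rule B0_I)
  have XY: "X \<in> borel_measurable M" "Y \<in> borel_measurable M" using assms by (auto simp: B0_meas)
  have s: "\<And>p. {\<omega>\<in>space M. X \<omega> = fst p \<and> Y \<omega> = snd p} \<in> sets M"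
    using XY by measurable
  show "(\<lambda>\<omega>. f (X \<omega>) (Y \<omega>)) \<in> borel_measurable M"
    apply (rule measurable_cong[THEN iffD2])
     apply (rule B0_comp2_repr[OF assms])
     apply assumption
    using s by (intro borel_measurable_sum borel_measurable_times borel_measurable_const
        borel_measurable_indicator) auto
  have "(\<lambda>\<omega>. f (X \<omega>) (Y \<omega>)) ` space M \<subseteq> (\<lambda>p. f (fst p) (snd p)) ` (X ` space M \<times> Y ` space M)"
  proof
    fix z assume "z \<in> (\<lambda>\<omega>. f (X \<omega>) (Y \<omega>)) ` space M"
    then obtain \<omega> where "\<omega> \<in> space M" "z = f (X \<omega>) (Y \<omega>)" by auto
    then show "z \<in> (\<lambda>p. f (fst p) (snd p)) ` (X ` space M \<times> Y ` space M)"
      by (intro image_eqI[of _ _ "(X \<omega>, Y \<omega>)"]) auto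
  qed
  then show "finite ((\<lambda>\<omega>. f (X \<omega>) (Y \<omega>)) ` space M)"
    using assms by (meson B0_fin finite_SigmaI finite_imageI finite_subset)
qed

lemma B0_const[simp]: "(\<lambda>\<omega>. c) \<in> B0 M"
proof (rule B0_I)
  show "finite ((\<lambda>\<omega>. c) ` space M)" by (auto simp: image_constant_conv)
qed simp

lemma B0_comp: "X \<in> B0 M \<Longrightarrow> (\<lambda>\<omega>. f (X \<omega>)) \<in> B0 M"
  using B0_comp2[of X "\<lambda>_. 0" "\<lambda>x y. f x"] by simp

lemma B0_add[intro]: "X \<in> B0 M \<Longrightarrow> Y \<in> B0 M \<Longrightarrow> (\<lambda>\<omega>. X \<omega> + Y \<omega>) \<in> B0 M"
  using B0_comp2[of X Y "(+)"] by simp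

lemma B0_diff[intro]: "X \<in> B0 M \<Longrightarrow> Y \<in> B0 M \<Longrightarrow> (\<lambda>\<omega>. X \<omega> - Y \<omega>) \<in> B0 M"
  using B0_comp2[of X Y "(-)"] by simp

lemma B0_mult[intro]: "X \<in> B0 M \<Longrightarrow> Y \<in> B0 M \<Longrightarrow> (\<lambda>\<omega>. X \<omega> * Y \<omega>) \<in> B0 M"
  using B0_comp2[of X Y "(*)"] by simp

lemma B0_indicator[intro]: "A \<in> sets M \<Longrightarrow> indicator A \<in> B0 M"
proof (rule B0_I)
  show "finite (indicator A ` space M :: real set)"
    by (rule finite_subset[of _ "{0,1}"]) (auto simp: indicator_def)
qed (rule borel_measurable_indicator)

lemma B0_ind_cmult[intro]: "A \<in> sets M \<Longrightarrow> (\<lambda>\<omega>. c * indicator A \<omega>) \<in> B0 M"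
  using B0_mult[OF B0_const B0_indicator] by simp

lemma B0_set_eq:
  assumes "X \<in> B0 M" shows "{\<omega>\<in>space M. X \<omega> = x} \<in> sets M"
proof -
  have [measurable]: "X \<in> borel_measurable M" using assms by (rule B0_meas)
  show ?thesis by measurable
qed

lemma B0_set_ge:
  assumes "X \<in> B0 M" shows "{\<omega>\<in>space M. t \<le> X \<omega>} \<in> sets M"
proof -
  have [measurable]: "X \<in> borel_measurable M" using assms by (rule B0_meas)
  show ?thesis by measurable
qed

lemma B0_set_less:
  assumes "X \<in> B0 M" shows "{\<omega>\<in>space M. X \<omega> < t} \<in> sets M"
proof -
  have [measurable]: "X \<in> borel_measurable M" using assms by (rule B0_meas)
  show ?thesis by measurable
qed

lemma B0_repr:
  fixes f :: "real \<Rightarrow> real"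
  assumes "X \<in> B0 M" "\<omega> \<in> space M"
  shows "f (X \<omega>) = (\<Sum>x\<in>X ` space M. f x * indicator {\<omega>\<in>space M. X \<omega> = x} \<omega>)"
proof -
  have "(\<Sum>x\<in>X ` space M. f x * indicator {\<omega>\<in>space M. X \<omega> = x} \<omega>)
      = (\<Sum>x\<in>X ` space M. f x * (if X \<omega> = x then 1 else 0))"
    using assms(2) by (intro sum.cong refl) (auto simp: indicator_def)
  also have "\<dots> = f (X \<omega>)"
    using assms sum_single_ind[of "X ` space M" "X \<omega>" f] by (simp add: B0_fin)
  finally show ?thesis by simp
qed

lemma B0_integrable:
  fixes f :: "real \<Rightarrow> real"
  assumes "X \<in> B0 M"
  shows "integrable M (\<lambda>\<omega>. f (X \<omega>))"
proof -
  have "integrable M (\<lambda>\<omega>. \<Sum>x\<in>X ` space M. f x * indicator {\<omega>\<in>space M. X \<omega> = x} \<omega>)"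
    using assms by (intro Bochner_Integration.integrable_sum integrable_mult_right integrable_real_indicator)
      (auto simp: B0_set_eq emeasure_eq_measure)
  moreover have "integrable M (\<lambda>\<omega>. f (X \<omega>)) \<longleftrightarrow> integrable M (\<lambda>\<omega>. \<Sum>x\<in>X ` space M. f x * indicator {\<omega>\<in>space M. X \<omega> = x} \<omega>)"
    by (rule Bochner_Integration.integrable_cong[OF refl]) (rule B0_repr[OF assms])
  ultimately show ?thesis by simp
qed

lemma B0_integral:
  fixes f :: "real \<Rightarrow> real"
  assumes "X \<in> B0 M"
  shows "integral\<^sup>L M (\<lambda>\<omega>. f (X \<omega>)) = (\<Sum>x\<in>X ` space M. f x * prob {\<omega>\<in>space M. X \<omega> = x})"
proof -
  have "integral\<^sup>L M (\<lambda>\<omega>. f (X \<omega>)) = integral\<^sup>L M (\<lambda>\<omega>. \<Sum>x\<in>X ` space M. f x * indicator {\<omega>\<in>space M. X \<omega> = x} \<omega>)"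
    by (rule Bochner_Integration.integral_cong[OF refl]) (rule B0_repr[OF assms])
  also have "\<dots> = (\<Sum>x\<in>X ` space M. f x * prob {\<omega>\<in>space M. X \<omega> = x})"
    apply (subst Bochner_Integration.integral_sum)
     apply (intro integrable_mult_right integrable_real_indicator)
    using assms by (auto simp: B0_set_eq emeasure_eq_measure)
  finally show ?thesis .
qed

lemma B0_sum_prob: "X \<in> B0 M \<Longrightarrow> (\<Sum>x\<in>X ` space M. prob {\<omega>\<in>space M. X \<omega> = x}) = 1"
  using B0_integral[of X "\<lambda>_. 1"] prob_space by simp

end


definition ebF :: "'a measure \<Rightarrow> real \<Rightarrow> ('a \<Rightarrow> real) \<Rightarrow> real \<Rightarrow> real" where
  "ebF M \<beta> X v = (\<integral>\<omega>. max (X \<omega> - v) 0 \<partial>M) - (1 + \<beta>) * (\<integral>\<omega>. max (v - X \<omega>) 0 \<partial>M)"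

definition gb :: "real \<Rightarrow> real \<Rightarrow> real" where
  "gb \<beta> y = max y 0 - (1 + \<beta>) * max (- y) 0"

lemma gb_alt: "gb \<beta> y = (if 0 \<le> y then y else (1 + \<beta>) * y)"
  by (auto simp: gb_def max_def)

lemma gb_strict: "\<beta> > -1 \<Longrightarrow> y < z \<Longrightarrow> gb \<beta> y < gb \<beta> z"
proof -
  assume b: "\<beta> > -1" and yz: "y < z"
  show ?thesis
  proof (cases "0 \<le> y")
    case True then show ?thesis using yz by (simp add: gb_alt)
  next
    case False
    then have neg: "(1 + \<beta>) * y < 0" using b by (simp add: mult_pos_neg)
    show ?thesis
    proof (cases "0 \<le> z")
      case True then show ?thesis using False neg by (simp add: gb_alt)
    next
      case False2: False
      have "(1 + \<beta>) * y < (1 + \<beta>) * z" using b yz by (intro mult_strict_left_mono) auto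
      then show ?thesis using False False2 by (simp add: gb_alt)
    qed
  qed
qed

lemma gb_nonpos: "\<beta> > -1 \<Longrightarrow> y \<le> 0 \<Longrightarrow> gb \<beta> y \<le> 0"
  by (auto simp: gb_alt mult_pos_neg intro: mult_nonneg_nonpos)

lemma gb_nonneg: "0 \<le> y \<Longrightarrow> 0 \<le> gb \<beta> y"
  by (auto simp: gb_alt)

lemma gb_cont: "continuous_on UNIV (gb \<beta>)"
  unfolding gb_def by (intro continuous_intros)

lemma abel_repr:
  fixes g :: "real \<Rightarrow> real"
  assumes "finite Z"
  shows "\<forall>x\<in>Z. g x = g (Min Z) + (\<Sum>z\<in>Z - {Min Z}. (g z - g (Max {z'\<in>Z. z' < z})) * (if z \<le> x then 1 else 0))"
  using assms
proof (induction Z rule: finite_linorder_max_induct)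
  case empty
  then show ?case by simp
next
  case (insert b A)
  show ?case
  proof (cases "A = {}")
    case True
    then show ?thesis by simp
  next
    case False
    have minAin: "Min A \<in> A" using insert False by simp
    have minA: "Min (insert b A) = Min A"
      proof -
      have "Min (insert b A) = min b (Min A)" using insert(1) False by (rule Min_insert)
      moreover have "Min A < b" using insert(2) minAin by blast
      ultimately show ?thesis by simp
    qed
    have pred: "\<And>z. z \<in> A \<Longrightarrow> {z'\<in>insert b A. z' < z} = {z'\<in>A. z' < z}"
      using insert by auto
    have pred': "\<And>z. z \<in> A \<Longrightarrow> {z'. (z' = b \<or> z' \<in> A) \<and> z' < z} = {z'\<in>A. z' < z}"
      using insert by auto
    have predb: "{z'\<in>insert b A. z' < b} = A" using insert by auto
    have split: "insert b A - {Min (insert b A)} = insert b (A - {Min A})"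
      using minA insert minAin by auto
    have bnot: "b \<notin> A - {Min A}" using insert by auto
    have sumeq: "\<And>x. (\<Sum>z\<in>insert b A - {Min (insert b A)}. (g z - g (Max {z'\<in>insert b A. z' < z})) * (if z \<le> x then 1 else 0))
        = (g b - g (Max A)) * (if b \<le> x then 1 else 0) +
          (\<Sum>z\<in>A - {Min A}. (g z - g (Max {z'\<in>A. z' < z})) * (if z \<le> x then 1 else 0))"
    proof -
      fix x
      have f: "finite (A - {Min A})" using insert(1) by simp
      show "?thesis x"
        unfolding split sum.insert[OF f bnot] predb
        by (intro arg_cong2[where f="(+)"] refl sum.cong) (auto simp: pred')
    qed
    show ?thesis
    proof
      fix x assume x: "x \<in> insert b A"
      show "g x = g (Min (insert b A)) + (\<Sum>z\<in>insert b A - {Min (insert b A)}. (g z - g (Max {z'\<in>insert b A. z' < z})) * (if z \<le> x then 1 else 0))"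
      proof (cases "x = b")
        case True
        have mA: "Max A \<in> A" using insert False by simp
        have all: "\<And>z. z \<in> A - {Min A} \<Longrightarrow> z \<le> b \<and> z \<le> Max A"
          using insert by (auto intro: less_imp_le)
        have "g (Max A) = g (Min A) + (\<Sum>z\<in>A - {Min A}. (g z - g (Max {z'\<in>A. z' < z})) * (if z \<le> Max A then 1 else 0))"
          using insert.IH mA by blast
        also have "(\<Sum>z\<in>A - {Min A}. (g z - g (Max {z'\<in>A. z' < z})) * (if z \<le> Max A then 1 else 0))
            = (\<Sum>z\<in>A - {Min A}. (g z - g (Max {z'\<in>A. z' < z})) * (if z \<le> b then 1 else 0))"
          using all by (intro sum.cong) auto
        finally show ?thesis using True sumeq[of b] minA by simp
      next
        case False
        then have xA: "x \<in> A" using x by simp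
        then have "\<not> b \<le> x" using insert by auto
        then show ?thesis using sumeq[of x] minA insert.IH xA by simp
      qed
    qed
  qed
qed

context prob_space
begin

lemma ebF_integral:
  assumes "X \<in> B0 M"
  shows "ebF M \<beta> X v = (\<integral>\<omega>. gb \<beta> (X \<omega> - v) \<partial>M)"
proof -
  have i1: "integrable M (\<lambda>\<omega>. max (X \<omega> - v) 0)" using B0_integrable[OF assms, of "\<lambda>x. max (x - v) 0"] by simp
  have i2: "integrable M (\<lambda>\<omega>. (1 + \<beta>) * max (v - X \<omega>) 0)" using B0_integrable[OF assms, of "\<lambda>x. (1 + \<beta>) * max (v - x) 0"] by simp
  show ?thesis
    unfolding ebF_def gb_def
    using i1 i2 by (simp add: Bochner_Integration.integral_diff)
qed

lemma ebF_sum: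
  assumes "X \<in> B0 M"
  shows "ebF M \<beta> X v = (\<Sum>x\<in>X ` space M. gb \<beta> (x - v) * prob {\<omega>\<in>space M. X \<omega> = x})"
  using ebF_integral[OF assms] B0_integral[OF assms, of "\<lambda>x. gb \<beta> (x - v)"] by simp

lemma B0_ex_pos:
  assumes "X \<in> B0 M"
  shows "\<exists>x\<in>X ` space M. prob {\<omega>\<in>space M. X \<omega> = x} > 0"
proof (rule ccontr)
  assume "\<not> ?thesis"
  then have "\<forall>x\<in>X ` space M. prob {\<omega>\<in>space M. X \<omega> = x} = 0"
    by (meson measure_nonneg not_less order.antisym)
  then have "(\<Sum>x\<in>X ` space M. prob {\<omega>\<in>space M. X \<omega> = x}) = 0" by (intro sum.neutral) auto
  then show False using B0_sum_prob[OF assms] by simp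
qed

lemma ebF_strict:
  assumes "X \<in> B0 M" "\<beta> > -1" "v < w"
  shows "ebF M \<beta> X w < ebF M \<beta> X v"
  unfolding ebF_sum[OF assms(1)]
proof (rule sum_strict_mono_ex1)
  show "finite (X ` space M)" using assms by (simp add: B0_fin)
  show "\<forall>x\<in>X ` space M. gb \<beta> (x - w) * prob {\<omega> \<in> space M. X \<omega> = x} \<le> gb \<beta> (x - v) * prob {\<omega> \<in> space M. X \<omega> = x}"
  proof
    fix x assume "x \<in> X ` space M"
    have "gb \<beta> (x - w) < gb \<beta> (x - v)" using gb_strict[OF assms(2)] assms(3) by simp
    then show "gb \<beta> (x - w) * prob {\<omega> \<in> space M. X \<omega> = x} \<le> gb \<beta> (x - v) * prob {\<omega> \<in> space M. X \<omega> = x}"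
      by (intro mult_right_mono) auto
  qed
  show "\<exists>a\<in>X ` space M. gb \<beta> (a - w) * prob {\<omega> \<in> space M. X \<omega> = a} < gb \<beta> (a - v) * prob {\<omega> \<in> space M. X \<omega> = a}"
  proof -
    obtain a where a: "a \<in> X ` space M" "prob {\<omega> \<in> space M. X \<omega> = a} > 0"
      using B0_ex_pos[OF assms(1)] by blast
    have "gb \<beta> (a - w) < gb \<beta> (a - v)" using gb_strict[OF assms(2)] assms(3) by simp
    then show ?thesis using a by (intro bexI[OF _ a(1)] mult_strict_right_mono) auto
  qed
qed

lemma ebF_cont:
  assumes "X \<in> B0 M"
  shows "continuous_on UNIV (ebF M \<beta> X)"
proof -
  have "ebF M \<beta> X = (\<lambda>v. \<Sum>x\<in>X ` space M. gb \<beta> (x - v) * prob {\<omega>\<in>space M. X \<omega> = x})"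
    using ebF_sum[OF assms] by auto
  moreover have "continuous_on UNIV (\<lambda>v. \<Sum>x\<in>X ` space M. gb \<beta> (x - v) * prob {\<omega>\<in>space M. X \<omega> = x})"
    unfolding gb_def by (intro continuous_intros)
  ultimately show ?thesis by simp
qed

lemma ebF_root:
  assumes "X \<in> B0 M" "\<beta> > -1"
  shows "\<exists>v. ebF M \<beta> X v = 0"
proof -
  let ?V = "X ` space M"
  have fin: "finite ?V" and ne: "?V \<noteq> {}" using assms B0_fin not_empty by auto
  let ?a = "Min ?V" and ?b = "Max ?V"
  have ab: "?a \<le> ?b" using fin ne by simp
  have "ebF M \<beta> X ?b \<le> 0"
    unfolding ebF_sum[OF assms(1)]
    using fin ne assms(2) by (intro sum_nonpos mult_nonpos_nonneg gb_nonpos) auto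
  moreover have "0 \<le> ebF M \<beta> X ?a"
    unfolding ebF_sum[OF assms(1)]
    using fin ne by (intro sum_nonneg mult_nonneg_nonneg gb_nonneg) auto
  ultimately show ?thesis
    using IVT2'[of "ebF M \<beta> X" ?b 0 ?a] ab continuous_on_subset[OF ebF_cont[OF assms(1)]] by auto
qed

lemma E_beta_iff:
  assumes "X \<in> B0 M" "\<beta> > -1"
  shows "E_beta M \<beta> X = v \<longleftrightarrow> ebF M \<beta> X v = 0"
proof -
  have eq: "\<And>v. ((\<integral>\<omega>. max (X \<omega> - v) 0 \<partial>M) = (1 + \<beta>) * (\<integral>\<omega>. max (v - X \<omega>) 0 \<partial>M)) \<longleftrightarrow> ebF M \<beta> X v = 0"
    unfolding ebF_def by simp
  have uniq: "\<And>u w. ebF M \<beta> X u = 0 \<Longrightarrow> ebF M \<beta> X w = 0 \<Longrightarrow> u = w"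
    using ebF_strict[OF assms] by (metis less_irrefl linorder_neqE_linordered_idom)
  obtain r where r: "ebF M \<beta> X r = 0" using ebF_root[OF assms] by blast
  have "E_beta M \<beta> X = r"
    unfolding E_beta_def eq using r uniq by blast
  then show ?thesis using r uniq by blast
qed

lemma E_beta_root: "X \<in> B0 M \<Longrightarrow> \<beta> > -1 \<Longrightarrow> ebF M \<beta> X (E_beta M \<beta> X) = 0"
  using E_beta_iff by blast

end


lemma max_cmult_diff: "(c::real) \<ge> 0 \<Longrightarrow> max (c * a - c * b) 0 = c * max (a - b) 0"
  by (simp add: right_diff_distrib[symmetric] max_def mult_le_0_iff)

context prob_space
begin

lemma exp_abel:
  fixes g :: "real \<Rightarrow> real"
  assumes X: "X \<in> B0 M" and Z: "finite Z" "X ` space M \<subseteq> Z"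
  shows "(\<integral>\<omega>. g (X \<omega>) \<partial>M) = g (Min Z) + (\<Sum>z\<in>Z - {Min Z}. (g z - g (Max {z'\<in>Z. z' < z})) * prob {\<omega>\<in>space M. z \<le> X \<omega>})"
proof -
  have rep: "\<And>\<omega>. \<omega> \<in> space M \<Longrightarrow> g (X \<omega>) = g (Min Z) + (\<Sum>z\<in>Z - {Min Z}. (g z - g (Max {z'\<in>Z. z' < z})) * indicator {\<omega>\<in>space M. z \<le> X \<omega>} \<omega>)"
  proof -
    fix \<omega> assume w: "\<omega> \<in> space M"
    then have "X \<omega> \<in> Z" using Z by auto
    then have "g (X \<omega>) = g (Min Z) + (\<Sum>z\<in>Z - {Min Z}. (g z - g (Max {z'\<in>Z. z' < z})) * (if z \<le> X \<omega> then 1 else 0))"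
      using abel_repr[OF Z(1), of g] by blast
    also have "(\<Sum>z\<in>Z - {Min Z}. (g z - g (Max {z'\<in>Z. z' < z})) * (if z \<le> X \<omega> then 1 else 0))
       = (\<Sum>z\<in>Z - {Min Z}. (g z - g (Max {z'\<in>Z. z' < z})) * indicator {\<omega>\<in>space M. z \<le> X \<omega>} \<omega>)"
      using w by (intro sum.cong refl) (simp add: indicator_def)
    finally show "?thesis \<omega>" .
  qed
  have sets: "\<And>z. {\<omega>\<in>space M. z \<le> X \<omega>} \<in> sets M" using B0_set_ge[OF X] by blast
  have int: "integrable M (\<lambda>\<omega>. \<Sum>z\<in>Z - {Min Z}. (g z - g (Max {z'\<in>Z. z' < z})) * indicator {\<omega>\<in>space M. z \<le> X \<omega>} \<omega>)"
    using sets by (intro Bochner_Integration.integrable_sum integrable_mult_right integrable_real_indicator)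
      (auto simp: emeasure_eq_measure)
  have "(\<integral>\<omega>. g (X \<omega>) \<partial>M) = (\<integral>\<omega>. g (Min Z) + (\<Sum>z\<in>Z - {Min Z}. (g z - g (Max {z'\<in>Z. z' < z})) * indicator {\<omega>\<in>space M. z \<le> X \<omega>} \<omega>) \<partial>M)"
    by (rule Bochner_Integration.integral_cong[OF refl]) (rule rep)
  also have "\<dots> = g (Min Z) + (\<integral>\<omega>. (\<Sum>z\<in>Z - {Min Z}. (g z - g (Max {z'\<in>Z. z' < z})) * indicator {\<omega>\<in>space M. z \<le> X \<omega>} \<omega>) \<partial>M)"
    using int prob_space by (subst Bochner_Integration.integral_add) auto
  also have "(\<integral>\<omega>. (\<Sum>z\<in>Z - {Min Z}. (g z - g (Max {z'\<in>Z. z' < z})) * indicator {\<omega>\<in>space M. z \<le> X \<omega>} \<omega>) \<partial>M)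
      = (\<Sum>z\<in>Z - {Min Z}. (g z - g (Max {z'\<in>Z. z' < z})) * prob {\<omega>\<in>space M. z \<le> X \<omega>})"
    using sets by (subst Bochner_Integration.integral_sum)
      (auto intro!: integrable_mult_right integrable_real_indicator simp: emeasure_eq_measure)
  finally show ?thesis .
qed

lemma fsd_compare:
  fixes g :: "real \<Rightarrow> real"
  assumes X: "X \<in> B0 M" and Y: "Y \<in> B0 M"
    and g: "\<And>a b. a < b \<Longrightarrow> g a < g b"
    and dom: "\<And>t. prob {\<omega>\<in>space M. t \<le> Y \<omega>} \<le> prob {\<omega>\<in>space M. t \<le> X \<omega>}"
  shows "(\<integral>\<omega>. g (Y \<omega>) \<partial>M) \<le> (\<integral>\<omega>. g (X \<omega>) \<partial>M)"
    and "(\<exists>t. prob {\<omega>\<in>space M. t \<le> Y \<omega>} < prob {\<omega>\<in>space M. t \<le> X \<omega>}) \<Longrightarrow>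
         (\<integral>\<omega>. g (Y \<omega>) \<partial>M) < (\<integral>\<omega>. g (X \<omega>) \<partial>M)"
proof -
  define Z where "Z = X ` space M \<union> Y ` space M"
  have Zf: "finite Z" using X Y by (simp add: Z_def B0_fin)
  have Zne: "Z \<noteq> {}" using not_empty by (simp add: Z_def)
  define \<delta> where "\<delta> z = g z - g (Max {z'\<in>Z. z' < z})" for z
  define pX where "pX z = prob {\<omega>\<in>space M. z \<le> X \<omega>}" for z
  define pY where "pY z = prob {\<omega>\<in>space M. z \<le> Y \<omega>}" for z
  have eX: "(\<integral>\<omega>. g (X \<omega>) \<partial>M) = g (Min Z) + (\<Sum>z\<in>Z - {Min Z}. \<delta> z * pX z)"
    unfolding \<delta>_def pX_def by (rule exp_abel[OF X Zf]) (auto simp: Z_def)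
  have eY: "(\<integral>\<omega>. g (Y \<omega>) \<partial>M) = g (Min Z) + (\<Sum>z\<in>Z - {Min Z}. \<delta> z * pY z)"
    unfolding \<delta>_def pY_def by (rule exp_abel[OF Y Zf]) (auto simp: Z_def)
  have diff: "(\<integral>\<omega>. g (X \<omega>) \<partial>M) - (\<integral>\<omega>. g (Y \<omega>) \<partial>M) = (\<Sum>z\<in>Z - {Min Z}. \<delta> z * (pX z - pY z))"
    unfolding eX eY by (simp add: sum_subtractf right_diff_distrib)
  have \<delta>pos: "\<delta> z > 0" if z: "z \<in> Z - {Min Z}" for z
  proof -
    have "Min Z \<in> Z" using Zf Zne by simp
    moreover have "Min Z \<le> z" using Zf z by simp
    ultimately have "Min Z \<in> {z'\<in>Z. z' < z}" using z by auto
    then have ne: "{z'\<in>Z. z' < z} \<noteq> {}" by blast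
    have "Max {z'\<in>Z. z' < z} \<in> {z'\<in>Z. z' < z}" using ne Zf by (intro Max_in) auto
    then have "Max {z'\<in>Z. z' < z} < z" by simp
    then show ?thesis using g unfolding \<delta>_def by auto
  qed
  have terms: "\<delta> z * (pX z - pY z) \<ge> 0" if "z \<in> Z - {Min Z}" for z
    using \<delta>pos[OF that] dom[of z] unfolding pX_def pY_def by simp
  have "0 \<le> (\<Sum>z\<in>Z - {Min Z}. \<delta> z * (pX z - pY z))" by (intro sum_nonneg terms)
  then show "(\<integral>\<omega>. g (Y \<omega>) \<partial>M) \<le> (\<integral>\<omega>. g (X \<omega>) \<partial>M)" using diff by simp
  assume "\<exists>t. prob {\<omega>\<in>space M. t \<le> Y \<omega>} < prob {\<omega>\<in>space M. t \<le> X \<omega>}"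
  then obtain t where t: "pY t < pX t" unfolding pX_def pY_def by blast
  define Zt where "Zt = {z\<in>Z. t \<le> z}"
  have Ztf: "finite Zt" using Zf by (simp add: Zt_def)
  have Ztne: "Zt \<noteq> {}"
  proof
    assume "Zt = {}"
    then have "{\<omega>\<in>space M. t \<le> X \<omega>} = {}" unfolding Zt_def Z_def by blast
    then have "pX t = 0" unfolding pX_def by (metis measure_empty)
    then show False using t measure_nonneg[of M] by (simp add: pY_def)
  qed
  define z1 where "z1 = Min Zt"
  have z1Zt: "z1 \<in> Zt" using Ztf Ztne by (simp add: z1_def)
  have seteqX: "{\<omega>\<in>space M. t \<le> X \<omega>} = {\<omega>\<in>space M. z1 \<le> X \<omega>}"
  proof -
    have "\<And>\<omega>. \<omega> \<in> space M \<Longrightarrow> t \<le> X \<omega> \<Longrightarrow> z1 \<le> X \<omega>"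
      unfolding z1_def using Ztf by (intro Min_le) (auto simp: Zt_def Z_def)
    moreover have "t \<le> z1" using z1Zt by (simp add: Zt_def)
    ultimately show ?thesis by auto
  qed
  have seteqY: "{\<omega>\<in>space M. t \<le> Y \<omega>} = {\<omega>\<in>space M. z1 \<le> Y \<omega>}"
  proof -
    have "\<And>\<omega>. \<omega> \<in> space M \<Longrightarrow> t \<le> Y \<omega> \<Longrightarrow> z1 \<le> Y \<omega>"
      unfolding z1_def using Ztf by (intro Min_le) (auto simp: Zt_def Z_def)
    moreover have "t \<le> z1" using z1Zt by (simp add: Zt_def)
    ultimately show ?thesis by auto
  qed
  have t1: "pY z1 < pX z1" using t seteqX seteqY by (simp add: pX_def pY_def)
  have z1Z: "z1 \<in> Z" using z1Zt by (simp add: Zt_def)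
  have z1min: "z1 \<noteq> Min Z"
  proof
    assume eq: "z1 = Min Z"
    have "{\<omega>\<in>space M. z1 \<le> Y \<omega>} = space M"
      using eq Zf by (auto simp: Z_def)
    then have "pY z1 = 1" by (simp add: pY_def prob_space)
    moreover have "pX z1 \<le> 1" by (simp add: pX_def)
    ultimately show False using t1 by simp
  qed
  have z1in: "z1 \<in> Z - {Min Z}" using z1Z z1min by simp
  have "(\<Sum>z\<in>Z - {Min Z}. \<delta> z * (pX z - pY z)) = \<delta> z1 * (pX z1 - pY z1) + (\<Sum>z\<in>Z - {Min Z} - {z1}. \<delta> z * (pX z - pY z))"
    using z1in Zf by (subst sum.remove[of _ z1]) auto
  moreover have "\<delta> z1 * (pX z1 - pY z1) > 0" using \<delta>pos[OF z1in] t1 by simp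
  moreover have "(\<Sum>z\<in>Z - {Min Z} - {z1}. \<delta> z * (pX z - pY z)) \<ge> 0" by (intro sum_nonneg terms) auto
  ultimately show "(\<integral>\<omega>. g (Y \<omega>) \<partial>M) < (\<integral>\<omega>. g (X \<omega>) \<partial>M)" using diff by simp
qed

lemma E_beta_CA:
  assumes "X \<in> B0 M" "\<beta> > -1"
  shows "E_beta M \<beta> (\<lambda>\<omega>. X \<omega> + m) = E_beta M \<beta> X + m"
proof -
  have "ebF M \<beta> (\<lambda>\<omega>. X \<omega> + m) (E_beta M \<beta> X + m) = ebF M \<beta> X (E_beta M \<beta> X)"
    unfolding ebF_def by simp
  then show ?thesis using E_beta_root[OF assms] E_beta_iff[OF B0_add[OF assms(1) B0_const] assms(2)] by simp
qed

lemma E_beta_PH: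
  assumes "X \<in> B0 M" "\<beta> > -1" "c \<ge> 0"
  shows "E_beta M \<beta> (\<lambda>\<omega>. c * X \<omega>) = c * E_beta M \<beta> X"
proof -
  have "ebF M \<beta> (\<lambda>\<omega>. c * X \<omega>) (c * E_beta M \<beta> X) = c * ebF M \<beta> X (E_beta M \<beta> X)"
    unfolding ebF_def using assms(3) by (simp add: max_cmult_diff right_diff_distrib)
  then show ?thesis using E_beta_root[OF assms(1,2)] E_beta_iff[OF B0_mult[OF B0_const assms(1)] assms(2)] by simp
qed

lemma E_beta_CC:
  assumes X: "X \<in> B0 M" and Y: "Y \<in> B0 M" and b: "\<beta> > -1"
    and eq: "{\<omega>\<in>space M. X \<omega> < E_beta M \<beta> X} = {\<omega>\<in>space M. Y \<omega> < E_beta M \<beta> Y}"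
  shows "E_beta M \<beta> (\<lambda>\<omega>. X \<omega> + Y \<omega>) = E_beta M \<beta> X + E_beta M \<beta> Y"
proof -
  define v where "v = E_beta M \<beta> X"
  define w where "w = E_beta M \<beta> Y"
  have iff: "\<And>\<omega>. \<omega> \<in> space M \<Longrightarrow> X \<omega> < v \<longleftrightarrow> Y \<omega> < w" using eq unfolding v_def w_def by blast
  have p1: "max (X \<omega> + Y \<omega> - (v + w)) 0 = max (X \<omega> - v) 0 + max (Y \<omega> - w) 0" if \<omega>: "\<omega> \<in> space M" for \<omega>
  proof (cases "X \<omega> < v")
    case True
    then have "Y \<omega> < w" using iff[OF \<omega>] by simp
    then show ?thesis using True by (auto simp: max_def)
  next
    case False
    then have "\<not> Y \<omega> < w" using iff[OF \<omega>] by simp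
    then show ?thesis using False by (auto simp: max_def)
  qed
  have p2: "max ((v + w) - (X \<omega> + Y \<omega>)) 0 = max (v - X \<omega>) 0 + max (w - Y \<omega>) 0" if \<omega>: "\<omega> \<in> space M" for \<omega>
  proof (cases "X \<omega> < v")
    case True
    then have "Y \<omega> < w" using iff[OF \<omega>] by simp
    then show ?thesis using True by (auto simp: max_def)
  next
    case False
    then have "\<not> Y \<omega> < w" using iff[OF \<omega>] by simp
    then show ?thesis using False by (auto simp: max_def)
  qed
  have i1: "integrable M (\<lambda>\<omega>. max (X \<omega> - v) 0)" using B0_integrable[OF X, of "\<lambda>x. max (x - v) 0"] by simp
  have i2: "integrable M (\<lambda>\<omega>. max (Y \<omega> - w) 0)" using B0_integrable[OF Y, of "\<lambda>x. max (x - w) 0"] by simp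
  have i3: "integrable M (\<lambda>\<omega>. max (v - X \<omega>) 0)" using B0_integrable[OF X, of "\<lambda>x. max (v - x) 0"] by simp
  have i4: "integrable M (\<lambda>\<omega>. max (w - Y \<omega>) 0)" using B0_integrable[OF Y, of "\<lambda>x. max (w - x) 0"] by simp
  have I1: "(\<integral>\<omega>. max (X \<omega> + Y \<omega> - (v + w)) 0 \<partial>M) = (\<integral>\<omega>. max (X \<omega> - v) 0 \<partial>M) + (\<integral>\<omega>. max (Y \<omega> - w) 0 \<partial>M)"
    by (subst Bochner_Integration.integral_add[OF i1 i2, symmetric]) (rule Bochner_Integration.integral_cong[OF refl p1])
  have I2: "(\<integral>\<omega>. max ((v + w) - (X \<omega> + Y \<omega>)) 0 \<partial>M) = (\<integral>\<omega>. max (v - X \<omega>) 0 \<partial>M) + (\<integral>\<omega>. max (w - Y \<omega>) 0 \<partial>M)"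
    by (subst Bochner_Integration.integral_add[OF i3 i4, symmetric]) (rule Bochner_Integration.integral_cong[OF refl p2])
  have "ebF M \<beta> (\<lambda>\<omega>. X \<omega> + Y \<omega>) (v + w) = ebF M \<beta> X v + ebF M \<beta> Y w"
    unfolding ebF_def I1 I2 by (simp add: algebra_simps)
  also have "\<dots> = 0" using E_beta_root[OF X b] E_beta_root[OF Y b] by (simp add: v_def w_def)
  finally show ?thesis using E_beta_iff[OF B0_add[OF X Y] b] by (simp add: v_def w_def)
qed

lemma E_beta_SM:
  assumes X: "X \<in> B0 M" and Y: "Y \<in> B0 M" and b: "\<beta> > -1"
    and dom: "\<And>t. prob {\<omega>\<in>space M. t \<le> Y \<omega>} \<le> prob {\<omega>\<in>space M. t \<le> X \<omega>}"
  shows "E_beta M \<beta> Y \<le> E_beta M \<beta> X"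
    and "(\<exists>t. prob {\<omega>\<in>space M. t \<le> Y \<omega>} < prob {\<omega>\<in>space M. t \<le> X \<omega>}) \<Longrightarrow> E_beta M \<beta> Y < E_beta M \<beta> X"
proof -
  define v where "v = E_beta M \<beta> Y"
  have gs: "\<And>a b. a < b \<Longrightarrow> gb \<beta> (a - v) < gb \<beta> (b - v)" using gb_strict[OF b] by simp
  have eY: "ebF M \<beta> Y v = 0" using E_beta_root[OF Y b] by (simp add: v_def)
  have cmp: "ebF M \<beta> Y v \<le> ebF M \<beta> X v"
    unfolding ebF_integral[OF X] ebF_integral[OF Y]
    by (rule fsd_compare(1)[OF X Y gs dom])
  show "E_beta M \<beta> Y \<le> E_beta M \<beta> X"
  proof (rule ccontr)
    assume "\<not> ?thesis"
    then have "E_beta M \<beta> X < v" by (simp add: v_def)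
    then have "ebF M \<beta> X v < ebF M \<beta> X (E_beta M \<beta> X)" by (rule ebF_strict[OF X b])
    then show False using cmp eY E_beta_root[OF X b] by simp
  qed
  assume st: "\<exists>t. prob {\<omega>\<in>space M. t \<le> Y \<omega>} < prob {\<omega>\<in>space M. t \<le> X \<omega>}"
  have cmp2: "ebF M \<beta> Y v < ebF M \<beta> X v"
    unfolding ebF_integral[OF X] ebF_integral[OF Y]
    by (rule fsd_compare(2)[OF X Y gs dom st])
  show "E_beta M \<beta> Y < E_beta M \<beta> X"
  proof (rule ccontr)
    assume "\<not> ?thesis"
    then have le: "E_beta M \<beta> X \<le> v" by (simp add: v_def)
    have "ebF M \<beta> X v \<le> ebF M \<beta> X (E_beta M \<beta> X)"
    proof (cases "E_beta M \<beta> X = v")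
      case False
      then have "E_beta M \<beta> X < v" using le by simp
      then show ?thesis using ebF_strict[OF X b] by (simp add: less_imp_le)
    qed simp
    then show False using cmp2 eY E_beta_root[OF X b] by simp
  qed
qed

lemma reverse_dir:
  assumes b: "\<beta> > -1" and I: "\<forall>X\<in>B0 M. I X = E_beta M \<beta> X"
  shows "strongly_monotone M I \<and> constant_additive M I \<and> positively_homogeneous M I \<and> concordant_additive M I"
proof (intro conjI)
  show "strongly_monotone M I"
    unfolding strongly_monotone_def
  proof (intro ballI impI conjI)
    fix X Y assume X: "X \<in> B0 M" and Y: "Y \<in> B0 M"
      and d: "\<forall>t. prob {\<omega> \<in> space M. Y \<omega> \<ge> t} \<le> prob {\<omega> \<in> space M. X \<omega> \<ge> t}"
    show "I Y \<le> I X" using E_beta_SM(1)[OF X Y b] d I X Y by simp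
    assume "\<exists>t. prob {\<omega> \<in> space M. Y \<omega> \<ge> t} < prob {\<omega> \<in> space M. X \<omega> \<ge> t}"
    then show "I Y < I X" using E_beta_SM(2)[OF X Y b] d I X Y by simp
  qed
  show "constant_additive M I"
    unfolding constant_additive_def using I E_beta_CA[OF _ b] B0_add[OF _ B0_const] by simp
  show "positively_homogeneous M I"
    unfolding positively_homogeneous_def using I E_beta_PH[OF _ b] B0_mult[OF B0_const] by simp
  show "concordant_additive M I"
    unfolding concordant_additive_def
  proof (intro ballI impI)
    fix X Y assume X: "X \<in> B0 M" and Y: "Y \<in> B0 M"
      and e: "{\<omega> \<in> space M. X \<omega> < I X} = {\<omega> \<in> space M. Y \<omega> < I Y}"
    show "I (\<lambda>\<omega>. X \<omega> + Y \<omega>) = I X + I Y"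
      using E_beta_CC[OF X Y b] e I X Y B0_add[OF X Y] by simp
  qed
qed

end


primrec iter_seq :: "('a set \<Rightarrow> 'a set) \<Rightarrow> nat \<Rightarrow> 'a set" where
  "iter_seq f 0 = {}"
| "iter_seq f (Suc n) = iter_seq f n \<union> f (iter_seq f n)"

context prob_space
begin

lemma nonatomic_halving:
  assumes na: "nonatomic M" and S: "S \<in> events" and pos: "prob S > 0"
  shows "\<exists>T\<in>events. T \<subseteq> S \<and> 0 < prob T \<and> prob T \<le> prob S / 2 ^ n"
proof (induction n)
  case 0
  then show ?case using S pos by (intro bexI[of _ S]) auto
next
  case (Suc n)
  then obtain T where T: "T \<in> events" "T \<subseteq> S" "0 < prob T" "prob T \<le> prob S / 2 ^ n" by blast
  obtain B where B: "B \<in> events" "B \<subseteq> T" "0 < prob B" "prob B < prob T"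
    using na T unfolding nonatomic_def by blast
  have TB: "prob (T - B) = prob T - prob B" using T B by (simp add: finite_measure_Diff)
  show ?case
  proof (cases "prob B \<le> prob T / 2")
    case True
    then show ?thesis using B T by (intro bexI[of _ B]) auto
  next
    case False
    then show ?thesis using B T TB by (intro bexI[of _ "T - B"]) auto
  qed
qed

lemma nonatomic_small:
  assumes na: "nonatomic M" and S: "S \<in> events" and pos: "prob S > 0" and e: "\<epsilon> > 0"
  shows "\<exists>T\<in>events. T \<subseteq> S \<and> 0 < prob T \<and> prob T \<le> \<epsilon>"
proof -
  obtain n :: nat where n: "prob S / \<epsilon> < real n" using reals_Archimedean2 by blast
  have "real n < (2::real) ^ n" by (rule of_nat_less_two_power)
  then have "prob S / \<epsilon> < 2 ^ n" using n by linarith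
  then have le: "prob S / 2 ^ n \<le> \<epsilon>" using e by (simp add: field_simps)
  obtain T where "T\<in>events" "T \<subseteq> S" "0 < prob T" "prob T \<le> prob S / 2 ^ n"
    using nonatomic_halving[OF na S pos] by blast
  then show ?thesis using le by (intro bexI[of _ T]) auto
qed

lemma sierpinski:
  assumes na: "nonatomic M" and S: "S \<in> events" and s: "0 \<le> s" "s \<le> prob S"
  shows "\<exists>T\<in>events. T \<subseteq> S \<and> prob T = s"
proof -
  define good where "good T C \<longleftrightarrow> C \<in> events \<and> C \<subseteq> S - T \<and> prob C \<le> s - prob T" for T C
  have exstep: "\<exists>C. good T C \<and> (\<forall>C'. good T C' \<longrightarrow> prob C' \<le> 2 * prob C)"
    if T: "T \<in> events" "T \<subseteq> S" "prob T \<le> s" for T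
  proof -
    let ?P = "prob ` {C. good T C}"
    have g0: "good T {}" using T by (simp add: good_def)
    have ne: "?P \<noteq> {}" using g0 by blast
    have bdd: "bdd_above ?P" by (intro bdd_aboveI[of _ 1]) auto
    have le: "\<And>C'. good T C' \<Longrightarrow> prob C' \<le> Sup ?P" using bdd by (intro cSup_upper) auto
    show ?thesis
    proof (cases "Sup ?P \<le> 0")
      case True
      then show ?thesis using g0 le by (intro exI[of _ "{}"]) (auto intro: order_trans)
    next
      case False
      then have "Sup ?P / 2 < Sup ?P" by simp
      then obtain x where "x \<in> ?P" "Sup ?P / 2 < x" using less_cSup_iff[OF ne bdd] by blast
      then obtain C where C: "good T C" "Sup ?P / 2 < prob C" by blast
      show ?thesis
      proof (intro exI[of _ C] conjI allI impI)
        show "good T C" by (rule C(1))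
        fix C' assume "good T C'"
        then have "prob C' \<le> Sup ?P" by (rule le)
        then show "prob C' \<le> 2 * prob C" using C(2) by linarith
      qed
    qed
  qed
  define step where "step T = (SOME C. good T C \<and> (\<forall>C'. good T C' \<longrightarrow> prob C' \<le> 2 * prob C))" for T
  define Ts where "Ts = iter_seq step"
  have inv: "Ts n \<in> events \<and> Ts n \<subseteq> S \<and> prob (Ts n) \<le> s" for n
  proof (induction n)
    case 0
    then show ?case using s by (simp add: Ts_def)
  next
    case (Suc n)
    then have st: "good (Ts n) (step (Ts n))"
      unfolding step_def using someI_ex[OF exstep[of "Ts n"]] by blast
    have "prob (Ts n \<union> step (Ts n)) = prob (Ts n) + prob (step (Ts n))"
      using st Suc by (intro finite_measure_Union) (auto simp: good_def)
    then show ?case using st Suc by (auto simp: Ts_def good_def)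
  qed
  have stp: "good (Ts n) (step (Ts n)) \<and> (\<forall>C'. good (Ts n) C' \<longrightarrow> prob C' \<le> 2 * prob (step (Ts n)))" for n
    unfolding step_def using someI_ex[OF exstep[of "Ts n"]] inv[of n] by blast
  have probSuc: "prob (Ts (Suc n)) = prob (Ts n) + prob (step (Ts n))" for n
  proof -
    have "prob (Ts n \<union> step (Ts n)) = prob (Ts n) + prob (step (Ts n))"
      using stp[of n] inv[of n] by (intro finite_measure_Union) (auto simp: good_def)
    then show ?thesis by (simp add: Ts_def)
  qed
  have inc: "incseq Ts" by (intro incseq_SucI) (simp add: Ts_def)
  define T where "T = (\<Union>n. Ts n)"
  have Tev: "T \<in> events" using inv by (auto simp: T_def)
  have TS: "T \<subseteq> S" using inv by (auto simp: T_def)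
  have lim: "(\<lambda>n. prob (Ts n)) \<longlonglongrightarrow> prob T"
    unfolding T_def using inv inc by (intro finite_Lim_measure_incseq) auto
  have Tle: "prob T \<le> s"
    using lim inv by (intro LIMSEQ_le_const2[OF lim]) auto
  have lim0: "(\<lambda>n. prob (step (Ts n))) \<longlonglongrightarrow> 0"
  proof -
    have "(\<lambda>n. prob (Ts (Suc n)) - prob (Ts n)) \<longlonglongrightarrow> prob T - prob T"
      by (intro tendsto_diff lim LIMSEQ_Suc[OF lim])
    then show ?thesis using probSuc by simp
  qed
  have "prob T = s"
  proof (rule ccontr)
    assume "prob T \<noteq> s"
    then have lt: "prob T < s" using Tle by simp
    have "prob (S - T) = prob S - prob T" using S Tev TS by (simp add: finite_measure_Diff)
    then have pos: "prob (S - T) > 0" using lt s by simp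
    obtain C where C: "C \<in> events" "C \<subseteq> S - T" "0 < prob C" "prob C \<le> s - prob T"
      using nonatomic_small[OF na _ pos, of "s - prob T"] lt S Tev by auto
    have "good (Ts n) C" for n
    proof -
      have sub: "Ts n \<subseteq> T" by (auto simp: T_def)
      then have "prob (Ts n) \<le> prob T" using Tev by (intro finite_measure_mono) auto
      then show ?thesis using C sub unfolding good_def by auto
    qed
    then have big: "prob C \<le> 2 * prob (step (Ts n))" for n using stp by blast
    have "eventually (\<lambda>n. prob (step (Ts n)) < prob C / 2) sequentially"
      using order_tendstoD(2)[OF lim0, of "prob C / 2"] C by simp
    then obtain n where "prob (step (Ts n)) < prob C / 2" by (auto simp: eventually_sequentially)
    then show False using big[of n] by simp
  qed
  then show ?thesis using Tev TS by blast
qed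

end


lemma cauchy_real:
  fixes \<psi> :: "real \<Rightarrow> real"
  assumes sig: "\<sigma> > 0"
    and mono: "\<And>a b. 0 \<le> a \<Longrightarrow> a \<le> b \<Longrightarrow> b \<le> \<sigma> \<Longrightarrow> \<psi> a \<le> \<psi> b"
    and add: "\<And>a b. 0 < a \<Longrightarrow> 0 < b \<Longrightarrow> a + b \<le> \<sigma> \<Longrightarrow> \<psi> (a + b) = \<psi> a + \<psi> b"
    and zero: "\<psi> 0 = 0"
    and s: "0 \<le> s" "s \<le> \<sigma>"
  shows "\<psi> s = \<psi> \<sigma> * s / \<sigma>"
proof -
  have mult: "\<psi> (real k * x) = real k * \<psi> x" if "0 < x" "real k * x \<le> \<sigma>" for k x
    using that
  proof (induction k)
    case 0 then show ?case using zero by simp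
  next
    case (Suc k)
    show ?case
    proof (cases "k = 0")
      case True then show ?thesis by simp
    next
      case False
      then have kx: "0 < real k * x" using Suc by simp
      have "real k * x \<le> real (Suc k) * x" using Suc.prems(1) by (intro mult_right_mono) auto
      then have le: "real k * x \<le> \<sigma>" using Suc.prems(2) by linarith
      have "\<psi> (real (Suc k) * x) = \<psi> (real k * x + x)" by (simp add: distrib_right add.commute)
      also have "\<dots> = \<psi> (real k * x) + \<psi> x" using Suc kx by (intro add) (auto simp: distrib_right)
      also have "\<dots> = real (Suc k) * \<psi> x" using Suc.IH[OF Suc.prems(1) le] by (simp add: distrib_right)
      finally show ?thesis .
    qed
  qed
  define c where "c = \<psi> \<sigma>"
  have c0: "0 \<le> c" using mono[of 0 \<sigma>] sig zero by (simp add: c_def)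
  have bound: "\<bar>\<psi> s - c * s / \<sigma>\<bar> \<le> c / real N" if N: "N \<ge> 1" for N :: nat
  proof -
    define x where "x = \<sigma> / real N"
    have x0: "x > 0" using sig N by (simp add: x_def)
    have Nx: "real N * x = \<sigma>" using N by (simp add: x_def)
    have px: "\<psi> x = c / real N"
      using mult[OF x0, of N] Nx N by (simp add: c_def field_simps)
    define k where "k = nat \<lfloor>s / x\<rfloor>"
    have k1: "real k \<le> s / x" using s x0 by (simp add: k_def)
    have k2: "s / x < real k + 1" using s x0 by (simp add: k_def)
    have kx1: "real k * x \<le> s" using k1 x0 by (simp add: field_simps)
    have kx2: "s < (real k + 1) * x" using k2 x0 by (simp add: field_simps)
    show ?thesis
    proof (cases "k < N")
      case True
      then have kN: "real k + 1 \<le> real N" by simp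
      have le1: "(real k + 1) * x \<le> \<sigma>" using kN x0 Nx by (metis mult_right_mono less_imp_le)
      have lo: "\<psi> (real k * x) \<le> \<psi> s" using kx1 x0 s by (intro mono) auto
      have hi: "\<psi> s \<le> \<psi> ((real k + 1) * x)" using kx2 le1 s by (intro mono) auto
      have e1: "\<psi> (real k * x) = real k * c / real N"
        using mult[OF x0, of k] kx1 s px by simp
      have e2: "\<psi> ((real k + 1) * x) = (real k + 1) * c / real N"
        using mult[OF x0, of "Suc k"] le1 px by (simp add: add.commute)
      have q1: "real k * c / real N \<le> c * s / \<sigma>"
      proof -
        have "real k / real N \<le> s / \<sigma>" using kx1 x0 sig N by (simp add: x_def field_simps)
        then have "c * (real k / real N) \<le> c * (s / \<sigma>)" using c0 by (rule mult_left_mono)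
        then show ?thesis by (simp add: mult.commute)
      qed
      have q2: "c * s / \<sigma> \<le> (real k + 1) * c / real N"
      proof -
        have "s / \<sigma> \<le> (real k + 1) / real N" using kx2 x0 sig N by (simp add: x_def field_simps)
        then have "c * (s / \<sigma>) \<le> c * ((real k + 1) / real N)" using c0 by (rule mult_left_mono)
        then show ?thesis by (simp add: mult.commute)
      qed
      have "(real k + 1) * c / real N - real k * c / real N = c / real N"
        by (simp add: diff_divide_distrib[symmetric] algebra_simps)
      then show ?thesis using lo hi e1 e2 q1 q2 by (simp add: abs_le_iff)
    next
      case False
      then have "real N \<le> real k" by simp
      then have "\<sigma> \<le> real k * x" using Nx x0 by (metis mult_right_mono less_imp_le)
      then have "s = \<sigma>" using kx1 s by simp
      then show ?thesis using sig c0 N by (simp add: c_def)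
    qed
  qed
  show ?thesis
  proof (rule ccontr)
    assume ne: "\<psi> s \<noteq> \<psi> \<sigma> * s / \<sigma>"
    define d where "d = \<bar>\<psi> s - c * s / \<sigma>\<bar>"
    have d0: "d > 0" using ne by (simp add: d_def c_def)
    obtain N :: nat where N: "c / d < real N" using reals_Archimedean2 by blast
    have "0 \<le> c / d" using c0 d0 by simp
    then have N1: "N \<ge> 1" using N by (cases N) auto
    have "c < d * real N" using N d0 by (simp add: field_simps)
    then have "c / real N < d" using N1 by (simp add: field_simps)
    then show False using bound[OF N1] by (simp add: d_def)
  qed
qed

context prob_space
begin

lemma cauchy_sets_na:
  fixes \<phi> :: "'a set \<Rightarrow> real"
  assumes na: "nonatomic M" and S: "S \<in> events" and Spos: "prob S > 0"
    and mono: "\<And>D D'. D \<in> events \<Longrightarrow> D \<subseteq> S \<Longrightarrow> D' \<in> events \<Longrightarrow> D' \<subseteq> S \<Longrightarrow> prob D \<le> prob D' \<Longrightarrow> \<phi> D \<le> \<phi> D'"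
    and add: "\<And>D D'. D \<in> events \<Longrightarrow> D \<subseteq> S \<Longrightarrow> D' \<in> events \<Longrightarrow> D' \<subseteq> S \<Longrightarrow> D \<inter> D' = {} \<Longrightarrow>
                0 < prob D \<Longrightarrow> 0 < prob D' \<Longrightarrow> \<phi> (D \<union> D') = \<phi> D + \<phi> D'"
    and null: "\<And>D. D \<in> events \<Longrightarrow> D \<subseteq> S \<Longrightarrow> prob D = 0 \<Longrightarrow> \<phi> D = 0"
    and D: "D \<in> events" "D \<subseteq> S"
  shows "\<phi> D = \<phi> S * prob D / prob S"
proof -
  define R where "R s = (SOME T. T \<in> events \<and> T \<subseteq> S \<and> prob T = s)" for s
  have R: "R s \<in> events \<and> R s \<subseteq> S \<and> prob (R s) = s" if hs: "0 \<le> s" "s \<le> prob S" for s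
  proof -
    obtain T where T: "T \<in> events \<and> T \<subseteq> S \<and> prob T = s" using sierpinski[OF na S hs] by blast
    then show ?thesis unfolding R_def by (rule someI)
  qed
  define \<psi> where "\<psi> s = \<phi> (R s)" for s
  have \<psi>eq: "\<psi> (prob E) = \<phi> E" if "E \<in> events" "E \<subseteq> S" for E
  proof -
    have p: "0 \<le> prob E" "prob E \<le> prob S" using that S by (auto intro: finite_measure_mono)
    have r: "R (prob E) \<in> events" "R (prob E) \<subseteq> S" "prob (R (prob E)) = prob E" using R[OF p] by auto
    have "\<phi> E \<le> \<phi> (R (prob E))" by (rule mono) (use r that in auto)
    moreover have "\<phi> (R (prob E)) \<le> \<phi> E" by (rule mono) (use r that in auto)
    ultimately show ?thesis unfolding \<psi>_def by (rule antisym[rotated])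
  qed
  have pmono: "\<psi> a \<le> \<psi> b" if "0 \<le> a" "a \<le> b" "b \<le> prob S" for a b
  proof -
    have ra: "R a \<in> events" "R a \<subseteq> S" "prob (R a) = a" using R[of a] that by auto
    have rb: "R b \<in> events" "R b \<subseteq> S" "prob (R b) = b" using R[of b] that by auto
    show ?thesis unfolding \<psi>_def by (rule mono) (use ra rb that in auto)
  qed
  have padd: "\<psi> (a + b) = \<psi> a + \<psi> b" if ab: "0 < a" "0 < b" "a + b \<le> prob S" for a b
  proof -
    have T: "R (a + b) \<in> events" "R (a + b) \<subseteq> S" "prob (R (a + b)) = a + b" using R[of "a + b"] ab by auto
    obtain T1 where T1: "T1 \<in> events" "T1 \<subseteq> R (a + b)" "prob T1 = a"
      using sierpinski[OF na T(1), of a] T ab by auto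
    have T2p: "prob (R (a + b) - T1) = b" using T T1 by (simp add: finite_measure_Diff)
    have un: "T1 \<union> (R (a + b) - T1) = R (a + b)" using T1 by auto
    have "\<psi> (a + b) = \<phi> (T1 \<union> (R (a + b) - T1))" using un by (simp add: \<psi>_def)
    also have "\<dots> = \<phi> T1 + \<phi> (R (a + b) - T1)"
      using T T1 T2p ab by (intro add) auto
    also have "\<dots> = \<psi> a + \<psi> b"
    proof -
      have e1: "\<phi> T1 = \<psi> a" using \<psi>eq[of T1] T T1 by auto
      have sub: "R (a + b) - T1 \<subseteq> S" using T by auto
      have e2: "\<phi> (R (a + b) - T1) = \<psi> b" using \<psi>eq[of "R (a + b) - T1"] T(1) T1(1) sub T2p by auto
      show ?thesis using e1 e2 by simp
    qed
    finally show ?thesis .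
  qed
  have pzero: "\<psi> 0 = 0"
  proof -
    have r: "R 0 \<in> events" "R 0 \<subseteq> S" "prob (R 0) = 0" using R[of 0] Spos by auto
    show ?thesis unfolding \<psi>_def by (rule null) (use r in auto)
  qed
  have "\<psi> (prob D) = \<psi> (prob S) * prob D / prob S"
    using D S by (intro cauchy_real[OF Spos pmono padd pzero]) (auto intro: finite_measure_mono)
  then show ?thesis using \<psi>eq[OF D] \<psi>eq[OF S] by simp
qed

end


lemma partition_union_rep:
  assumes P: "partition_on \<Omega> Q" and D: "D \<in> sigma_sets \<Omega> Q"
  shows "\<exists>F\<subseteq>Q. D = \<Union>F"
  using D
proof (induction rule: sigma_sets.induct)
  case (Basic a)
  then show ?case by (intro exI[of _ "{a}"]) auto
next
  case Empty
  then show ?case by (intro exI[of _ "{}"]) auto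
next
  case (Compl a)
  then obtain F where F: "F \<subseteq> Q" "a = \<Union>F" by blast
  have U: "\<Union>Q = \<Omega>" and dj: "disjoint Q" using P by (auto simp: partition_on_def)
  have "\<Omega> - a = \<Union>(Q - F)"
  proof
    show "\<Omega> - a \<subseteq> \<Union>(Q - F)" using U F by auto
    show "\<Union>(Q - F) \<subseteq> \<Omega> - a"
    proof
      fix x assume "x \<in> \<Union>(Q - F)"
      then obtain B where B: "B \<in> Q" "B \<notin> F" "x \<in> B" by auto
      have "x \<in> \<Omega>" using B U by auto
      moreover have "x \<notin> a"
      proof
        assume "x \<in> a"
        then obtain B' where B': "B' \<in> F" "x \<in> B'" using F by auto
        then have "B \<noteq> B'" using B by auto
        then have "B \<inter> B' = {}" using dj B B' F unfolding disjoint_def by blast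
        then show False using B B' by auto
      qed
      ultimately show "x \<in> \<Omega> - a" by simp
    qed
  qed
  then show ?case by (intro exI[of _ "Q - F"]) auto
next
  case (Union a)
  then have "\<forall>i. \<exists>F. F \<subseteq> Q \<and> a i = \<Union>F" by blast
  then obtain Fs where Fs: "\<And>i. Fs i \<subseteq> Q \<and> a i = \<Union>(Fs i)" by metis
  have "(\<Union>i. a i) = \<Union>(\<Union>i. Fs i)" using Fs by auto
  moreover have "(\<Union>i. Fs i) \<subseteq> Q" using Fs by blast
  ultimately show ?case by blast
qed

context prob_space
begin

definition fuQ :: "'a set set \<Rightarrow> bool" where
  "fuQ Q \<longleftrightarrow> finite Q \<and> partition_on (space M) Q \<and> sets M = sigma_sets (space M) Q \<and>
      (\<forall>B\<in>Q. prob B = 1 / real (card Q))"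

lemma fuQ_ex: "finite_uniform M \<Longrightarrow> \<exists>Q. fuQ Q"
  unfolding finite_uniform_def fuQ_def by blast

lemma fuQ_card: assumes "fuQ Q" shows "card Q > 0"
proof -
  have "\<Union>Q = space M" using assms by (auto simp: fuQ_def partition_on_def)
  then have "Q \<noteq> {}" using not_empty by auto
  then show ?thesis using assms by (simp add: fuQ_def card_gt_0_iff)
qed

lemma fuQ_events: "fuQ Q \<Longrightarrow> B \<in> Q \<Longrightarrow> B \<in> events"
  unfolding fuQ_def by auto

lemma fuQ_rep:
  assumes "fuQ Q" "D \<in> events" shows "\<exists>F\<subseteq>Q. D = \<Union>F"
proof -
  have p: "partition_on (space M) Q" and s: "sets M = sigma_sets (space M) Q" using assms(1) by (auto simp: fuQ_def)
  have "D \<in> sigma_sets (space M) Q" using assms(2) s by simp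
  then show ?thesis by (rule partition_union_rep[OF p])
qed

lemma fuQ_union_events: "fuQ Q \<Longrightarrow> F \<subseteq> Q \<Longrightarrow> \<Union>F \<in> events"
proof -
  assume q: "fuQ Q" and F: "F \<subseteq> Q"
  then have "finite F" by (auto simp: fuQ_def intro: finite_subset)
  then show ?thesis using F fuQ_events[OF q] by (intro sets.finite_Union) auto
qed

lemma fuQ_disj:
  assumes q: "fuQ Q" and B: "B \<in> Q" and F: "F \<subseteq> Q" and nB: "B \<notin> F"
  shows "B \<inter> \<Union>F = {}"
proof -
  have dj: "disjoint Q" using q by (simp add: fuQ_def partition_on_def)
  have "B \<inter> B' = {}" if "B' \<in> F" for B'
    using disjointD[OF dj B] that F nB by blast
  then show ?thesis by blast
qed

lemma fuQ_prob: assumes q: "fuQ Q" and F: "F \<subseteq> Q" shows "prob (\<Union>F) = real (card F) / real (card Q)"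
proof -
  have "finite F" using q F by (auto simp: fuQ_def intro: finite_subset)
  then show ?thesis using F
  proof (induction F rule: finite_induct)
    case empty then show ?case by simp
  next
    case (insert B F)
    have "prob (\<Union>(insert B F)) = prob (B \<union> \<Union>F)" by simp
    also have "\<dots> = prob B + prob (\<Union>F)"
    proof (rule finite_measure_Union)
      show "B \<in> events" using insert(4) fuQ_events[OF q] by simp
      show "\<Union>F \<in> events" using insert(4) fuQ_union_events[OF q] by simp
      show "B \<inter> \<Union>F = {}" using insert(2,4) fuQ_disj[OF q] by simp
    qed
    also have "\<dots> = 1 / real (card Q) + real (card F) / real (card Q)"
      using insert q by (auto simp: fuQ_def)
    also have "\<dots> = real (card (insert B F)) / real (card Q)"
      using insert by (simp add: add_divide_distrib)
    finally show ?case .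
  qed
qed

lemma cauchy_sets_fu:
  fixes \<phi> :: "'a set \<Rightarrow> real"
  assumes q: "fuQ Q" and S: "S \<in> events" and Spos: "prob S > 0"
    and mono: "\<And>D D'. D \<in> events \<Longrightarrow> D \<subseteq> S \<Longrightarrow> D' \<in> events \<Longrightarrow> D' \<subseteq> S \<Longrightarrow> prob D \<le> prob D' \<Longrightarrow> \<phi> D \<le> \<phi> D'"
    and add: "\<And>D D'. D \<in> events \<Longrightarrow> D \<subseteq> S \<Longrightarrow> D' \<in> events \<Longrightarrow> D' \<subseteq> S \<Longrightarrow> D \<inter> D' = {} \<Longrightarrow>
                0 < prob D \<Longrightarrow> 0 < prob D' \<Longrightarrow> \<phi> (D \<union> D') = \<phi> D + \<phi> D'"
    and null: "\<And>D. D \<in> events \<Longrightarrow> D \<subseteq> S \<Longrightarrow> prob D = 0 \<Longrightarrow> \<phi> D = 0"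
    and D: "D \<in> events" "D \<subseteq> S"
  shows "\<phi> D = \<phi> S * prob D / prob S"
proof -
  have n0: "card Q > 0" by (rule fuQ_card[OF q])
  have bp: "\<And>B. B \<in> Q \<Longrightarrow> prob B = 1 / real (card Q)" using q by (simp add: fuQ_def)
  obtain FS where FS: "FS \<subseteq> Q" "S = \<Union>FS" using fuQ_rep[OF q S] by blast
  have "FS \<noteq> {}" using FS Spos by auto
  then obtain B1 where B1: "B1 \<in> FS" by blast
  have B1Q: "B1 \<in> Q" and B1S: "B1 \<subseteq> S" using B1 FS by auto
  define c where "c = \<phi> B1"
  have blk: "\<phi> B = c" if "B \<in> Q" "B \<subseteq> S" for B
  proof -
    have "\<phi> B \<le> \<phi> B1" using that B1Q B1S bp fuQ_events[OF q] by (intro mono) auto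
    moreover have "\<phi> B1 \<le> \<phi> B" using that B1Q B1S bp fuQ_events[OF q] by (intro mono) auto
    ultimately show ?thesis by (simp add: c_def)
  qed
  have main: "\<phi> (\<Union>F) = real (card F) * c" if F: "F \<subseteq> Q" "\<Union>F \<subseteq> S" for F
  proof -
    have "finite F" using q F by (auto simp: fuQ_def intro: finite_subset)
    then show ?thesis using F
    proof (induction F rule: finite_induct)
      case empty then show ?case using null by simp
    next
      case (insert B F)
      show ?case
      proof (cases "F = {}")
        case True then show ?thesis using insert blk by simp
      next
        case False
        have Fp: "prob (\<Union>F) > 0" using fuQ_prob[OF q, of F] insert False n0
          by (simp add: card_gt_0_iff)
        have "\<phi> (\<Union>(insert B F)) = \<phi> (B \<union> \<Union>F)" by simp
        also have "\<dots> = \<phi> B + \<phi> (\<Union>F)"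
          using insert fuQ_events[OF q] fuQ_union_events[OF q] fuQ_disj[OF q] Fp bp n0
          by (intro add) auto
        also have "\<dots> = c + real (card F) * c" using insert blk by auto
        finally show ?thesis using insert by (simp add: algebra_simps)
      qed
    qed
  qed
  obtain FD where FD: "FD \<subseteq> Q" "D = \<Union>FD" using fuQ_rep[OF q D(1)] by blast
  have e1: "\<phi> D = real (card FD) * c" using main FD D by simp
  have e2: "\<phi> S = real (card FS) * c" using main FS by simp
  have e3: "prob D = real (card FD) / real (card Q)" using fuQ_prob[OF q FD(1)] FD by simp
  have e4: "prob S = real (card FS) / real (card Q)" using fuQ_prob[OF q FS(1)] FS by simp
  have cFS: "card FS > 0"
  proof (rule ccontr)
    assume "\<not> card FS > 0"
    then have "card FS = 0" by simp
    then show False using Spos e4 by simp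
  qed
  show ?thesis unfolding e1 e2 e3 e4 using n0 cFS by (simp add: field_simps)
qed

lemma split_fu:
  assumes q: "fuQ Q" and S: "S \<in> events" and T: "T \<in> events" and le: "prob T \<le> prob S"
  shows "\<exists>S'\<in>events. S' \<subseteq> S \<and> prob S' = prob T"
proof -
  have n0: "card Q > 0" by (rule fuQ_card[OF q])
  obtain FS where FS: "FS \<subseteq> Q" "S = \<Union>FS" using fuQ_rep[OF q S] by blast
  obtain FT where FT: "FT \<subseteq> Q" "T = \<Union>FT" using fuQ_rep[OF q T] by blast
  have "real (card FT) / real (card Q) \<le> real (card FS) / real (card Q)"
    using le fuQ_prob[OF q FS(1)] fuQ_prob[OF q FT(1)] FS FT by simp
  then have "card FT \<le> card FS" using n0 by (simp add: divide_le_cancel)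
  then obtain F' where F': "F' \<subseteq> FS" "card F' = card FT" by (metis obtain_subset_with_card_n)
  show ?thesis
    using F' FS FT fuQ_prob[OF q, of F'] fuQ_prob[OF q FT(1)] fuQ_union_events[OF q, of F']
    by (intro bexI[of _ "\<Union>F'"]) auto
qed

lemma adequate_split:
  assumes a: "adequate M" and S: "S \<in> events" and T: "T \<in> events" and le: "prob T \<le> prob S"
  shows "\<exists>S'\<in>events. S' \<subseteq> S \<and> prob S' = prob T"
proof (cases "nonatomic M")
  case True
  then show ?thesis using sierpinski[OF True S, of "prob T"] le by auto
next
  case False
  then obtain Q where "fuQ Q" using a fuQ_ex by (auto simp: adequate_def)
  then show ?thesis using split_fu S T le by blast
qed

lemma cauchy_sets:
  fixes \<phi> :: "'a set \<Rightarrow> real"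
  assumes a: "adequate M" and S: "S \<in> events" and Spos: "prob S > 0"
    and mono: "\<And>D D'. D \<in> events \<Longrightarrow> D \<subseteq> S \<Longrightarrow> D' \<in> events \<Longrightarrow> D' \<subseteq> S \<Longrightarrow> prob D \<le> prob D' \<Longrightarrow> \<phi> D \<le> \<phi> D'"
    and add: "\<And>D D'. D \<in> events \<Longrightarrow> D \<subseteq> S \<Longrightarrow> D' \<in> events \<Longrightarrow> D' \<subseteq> S \<Longrightarrow> D \<inter> D' = {} \<Longrightarrow>
                0 < prob D \<Longrightarrow> 0 < prob D' \<Longrightarrow> \<phi> (D \<union> D') = \<phi> D + \<phi> D'"
    and null: "\<And>D. D \<in> events \<Longrightarrow> D \<subseteq> S \<Longrightarrow> prob D = 0 \<Longrightarrow> \<phi> D = 0"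
    and D: "D \<in> events" "D \<subseteq> S"
  shows "\<phi> D = \<phi> S * prob D / prob S"
proof (cases "nonatomic M")
  case True
  show ?thesis by (rule cauchy_sets_na[OF True S Spos mono add null D])
next
  case False
  then obtain Q where q: "fuQ Q" using a fuQ_ex by (auto simp: adequate_def)
  show ?thesis by (rule cauchy_sets_fu[OF q S Spos mono add null D])
qed

end


definition tl :: "real \<Rightarrow> real \<Rightarrow> real \<Rightarrow> 'a set \<Rightarrow> 'a set \<Rightarrow> 'a set \<Rightarrow> 'a \<Rightarrow> real" where
  "tl a b c P1 P2 P3 \<omega> = a * indicator P1 \<omega> + b * indicator P2 \<omega> + c * indicator P3 \<omega>"

context prob_space
begin

definition part3 :: "'a set \<Rightarrow> 'a set \<Rightarrow> 'a set \<Rightarrow> bool" where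
  "part3 P1 P2 P3 \<longleftrightarrow> P1 \<in> events \<and> P2 \<in> events \<and> P3 \<in> events \<and> P1 \<inter> P2 = {} \<and> P1 \<inter> P3 = {} \<and>
     P2 \<inter> P3 = {} \<and> P1 \<union> P2 \<union> P3 = space M"

lemma B0_cong: "X \<in> B0 M \<Longrightarrow> (\<And>\<omega>. \<omega> \<in> space M \<Longrightarrow> Y \<omega> = X \<omega>) \<Longrightarrow> Y \<in> B0 M"
proof -
  assume X: "X \<in> B0 M" and e: "\<And>\<omega>. \<omega> \<in> space M \<Longrightarrow> Y \<omega> = X \<omega>"
  have "Y \<in> borel_measurable M" using B0_meas[OF X] e by (metis measurable_cong)
  moreover have "Y ` space M = X ` space M" using e by auto
  ultimately show ?thesis using X by (auto simp: B0_def)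
qed

lemma tl_B0: "part3 P1 P2 P3 \<Longrightarrow> tl a b c P1 P2 P3 \<in> B0 M"
proof -
  assume p: "part3 P1 P2 P3"
  have "(\<lambda>\<omega>. (a * indicator P1 \<omega> + b * indicator P2 \<omega>) + c * indicator P3 \<omega>) \<in> B0 M"
    using p unfolding part3_def by (intro B0_add B0_ind_cmult) auto
  then show ?thesis unfolding tl_def[abs_def] by simp
qed

lemma tl_1: "part3 P1 P2 P3 \<Longrightarrow> \<omega> \<in> P1 \<Longrightarrow> tl a b c P1 P2 P3 \<omega> = a"
  unfolding part3_def tl_def by (auto simp: indicator_def)
lemma tl_2: "part3 P1 P2 P3 \<Longrightarrow> \<omega> \<in> P2 \<Longrightarrow> tl a b c P1 P2 P3 \<omega> = b"
  unfolding part3_def tl_def by (auto simp: indicator_def)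
lemma tl_3: "part3 P1 P2 P3 \<Longrightarrow> \<omega> \<in> P3 \<Longrightarrow> tl a b c P1 P2 P3 \<omega> = c"
  unfolding part3_def tl_def by (auto simp: indicator_def)

lemma part3_cases: "part3 P1 P2 P3 \<Longrightarrow> \<omega> \<in> space M \<Longrightarrow> (\<omega> \<in> P1 \<Longrightarrow> Q) \<Longrightarrow> (\<omega> \<in> P2 \<Longrightarrow> Q) \<Longrightarrow> (\<omega> \<in> P3 \<Longrightarrow> Q) \<Longrightarrow> Q"
  unfolding part3_def by blast

lemma tl_prob_ge:
  assumes p: "part3 P1 P2 P3"
  shows "prob {\<omega>\<in>space M. t \<le> tl a b c P1 P2 P3 \<omega>} =
    (if t \<le> a then prob P1 else 0) + (if t \<le> b then prob P2 else 0) + (if t \<le> c then prob P3 else 0)"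
proof -
  define S1 where "S1 = (if t \<le> a then P1 else {})"
  define S2 where "S2 = (if t \<le> b then P2 else {})"
  define S3 where "S3 = (if t \<le> c then P3 else {})"
  have ev: "S1 \<in> events" "S2 \<in> events" "S3 \<in> events" using p by (auto simp: S1_def S2_def S3_def part3_def)
  have eq: "{\<omega>\<in>space M. t \<le> tl a b c P1 P2 P3 \<omega>} = S1 \<union> S2 \<union> S3"
  proof (intro set_eqI iffI)
    fix \<omega> assume "\<omega> \<in> {\<omega>\<in>space M. t \<le> tl a b c P1 P2 P3 \<omega>}"
    then have w: "\<omega> \<in> space M" "t \<le> tl a b c P1 P2 P3 \<omega>" by auto
    show "\<omega> \<in> S1 \<union> S2 \<union> S3"
      by (rule part3_cases[OF p w(1)]) (use w tl_1[OF p] tl_2[OF p] tl_3[OF p] in \<open>auto simp: S1_def S2_def S3_def\<close>)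
  next
    fix \<omega> assume w: "\<omega> \<in> S1 \<union> S2 \<union> S3"
    then have "\<omega> \<in> space M" using p by (auto simp: S1_def S2_def S3_def part3_def split: if_splits)
    then show "\<omega> \<in> {\<omega>\<in>space M. t \<le> tl a b c P1 P2 P3 \<omega>}"
      using w tl_1[OF p] tl_2[OF p] tl_3[OF p] by (auto simp: S1_def S2_def S3_def split: if_splits)
  qed
  have d12: "S1 \<inter> S2 = {}" and d3: "(S1 \<union> S2) \<inter> S3 = {}" using p by (auto simp: S1_def S2_def S3_def part3_def)
  have "prob (S1 \<union> S2 \<union> S3) = prob (S1 \<union> S2) + prob S3"
    using ev d3 by (intro finite_measure_Union) auto
  also have "prob (S1 \<union> S2) = prob S1 + prob S2"
    using ev d12 by (intro finite_measure_Union) auto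
  finally show ?thesis unfolding eq by (simp add: S1_def S2_def S3_def)
qed

lemma tl_integral:
  fixes f :: "real \<Rightarrow> real"
  assumes p: "part3 P1 P2 P3"
  shows "(\<integral>\<omega>. f (tl a b c P1 P2 P3 \<omega>) \<partial>M) = f a * prob P1 + f b * prob P2 + f c * prob P3"
proof -
  have ev: "P1 \<in> events" "P2 \<in> events" "P3 \<in> events" using p by (auto simp: part3_def)
  have pt: "f (tl a b c P1 P2 P3 \<omega>) = f a * indicator P1 \<omega> + f b * indicator P2 \<omega> + f c * indicator P3 \<omega>"
    if w: "\<omega> \<in> space M" for \<omega>
    by (rule part3_cases[OF p w]) (use p in \<open>auto simp: tl_1 tl_2 tl_3 part3_def indicator_def\<close>)
  have i: "integrable M (indicator P :: 'a \<Rightarrow> real)" if "P \<in> events" for P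
    using that by (intro integrable_real_indicator) (auto simp: emeasure_eq_measure)
  have "(\<integral>\<omega>. f (tl a b c P1 P2 P3 \<omega>) \<partial>M) = (\<integral>\<omega>. f a * indicator P1 \<omega> + f b * indicator P2 \<omega> + f c * indicator P3 \<omega> \<partial>M)"
    by (rule Bochner_Integration.integral_cong[OF refl pt])
  also have "\<dots> = f a * prob P1 + f b * prob P2 + f c * prob P3"
    using i[OF ev(1)] i[OF ev(2)] i[OF ev(3)] ev by simp
  finally show ?thesis .
qed

end

locale axI = prob_space M for M :: "'a measure" +
  fixes I :: "('a \<Rightarrow> real) \<Rightarrow> real"
  assumes SM: "strongly_monotone M I" and CA: "constant_additive M I"
    and PH: "positively_homogeneous M I" and CC: "concordant_additive M I"
    and adq: "adequate M"
begin

lemma I_SM: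
  assumes "X \<in> B0 M" "Y \<in> B0 M" "\<And>t. prob {\<omega>\<in>space M. t \<le> Y \<omega>} \<le> prob {\<omega>\<in>space M. t \<le> X \<omega>}"
  shows "I Y \<le> I X"
  using SM assms unfolding strongly_monotone_def by blast

lemma I_SM_strict:
  assumes "X \<in> B0 M" "Y \<in> B0 M" "\<And>t. prob {\<omega>\<in>space M. t \<le> Y \<omega>} \<le> prob {\<omega>\<in>space M. t \<le> X \<omega>}"
    and "prob {\<omega>\<in>space M. t \<le> Y \<omega>} < prob {\<omega>\<in>space M. t \<le> X \<omega>}"
  shows "I Y < I X"
  using SM assms unfolding strongly_monotone_def by blast

lemma I_law:
  assumes "X \<in> B0 M" "Y \<in> B0 M" "\<And>t. prob {\<omega>\<in>space M. t \<le> X \<omega>} = prob {\<omega>\<in>space M. t \<le> Y \<omega>}"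
  shows "I X = I Y"
  using I_SM[OF assms(1,2)] I_SM[OF assms(2,1)] assms(3) by (simp add: antisym)

lemma I_cong:
  assumes X: "X \<in> B0 M" and e: "\<And>\<omega>. \<omega> \<in> space M \<Longrightarrow> Y \<omega> = X \<omega>"
  shows "I Y = I X"
proof -
  have Y: "Y \<in> B0 M" by (rule B0_cong[OF X e])
  have "{\<omega>\<in>space M. t \<le> Y \<omega>} = {\<omega>\<in>space M. t \<le> X \<omega>}" for t using e by auto
  then show ?thesis using I_law[OF Y X] by simp
qed

lemma I_ae:
  assumes X: "X \<in> B0 M" and Y: "Y \<in> B0 M" and N: "N \<in> events" "prob N = 0"
    and e: "\<And>\<omega>. \<omega> \<in> space M - N \<Longrightarrow> X \<omega> = Y \<omega>"
  shows "I X = I Y"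
proof (rule I_law[OF X Y])
  fix t
  have le: "prob {\<omega>\<in>space M. t \<le> U \<omega>} \<le> prob {\<omega>\<in>space M. t \<le> V \<omega>}"
    if U: "U \<in> B0 M" and V: "V \<in> B0 M" and eUV: "\<And>\<omega>. \<omega> \<in> space M - N \<Longrightarrow> U \<omega> = V \<omega>" for U V
  proof -
    have "{\<omega>\<in>space M. t \<le> U \<omega>} \<subseteq> {\<omega>\<in>space M. t \<le> V \<omega>} \<union> N" using eUV by auto
    then have "prob {\<omega>\<in>space M. t \<le> U \<omega>} \<le> prob ({\<omega>\<in>space M. t \<le> V \<omega>} \<union> N)"
      using N B0_set_ge[OF V] by (intro finite_measure_mono) auto
    also have "\<dots> \<le> prob {\<omega>\<in>space M. t \<le> V \<omega>} + prob N"
      using N B0_set_ge[OF V] by (intro measure_Un_le) (auto simp: fmeasurable_def emeasure_eq_measure)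
    finally show ?thesis using N by simp
  qed
  show "prob {\<omega>\<in>space M. t \<le> X \<omega>} = prob {\<omega>\<in>space M. t \<le> Y \<omega>}"
    using le[OF X Y e] le[OF Y X] e by (simp add: antisym)
qed

lemma I_CA: "X \<in> B0 M \<Longrightarrow> I (\<lambda>\<omega>. X \<omega> + m) = I X + m"
  using CA unfolding constant_additive_def by blast

lemma I_PH: "X \<in> B0 M \<Longrightarrow> c \<ge> 0 \<Longrightarrow> I (\<lambda>\<omega>. c * X \<omega>) = c * I X"
  using PH unfolding positively_homogeneous_def by blast

lemma I_CC: "X \<in> B0 M \<Longrightarrow> Y \<in> B0 M \<Longrightarrow> {\<omega>\<in>space M. X \<omega> < I X} = {\<omega>\<in>space M. Y \<omega> < I Y} \<Longrightarrow>
    I (\<lambda>\<omega>. X \<omega> + Y \<omega>) = I X + I Y"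
  using CC unfolding concordant_additive_def by blast

lemma I_zero: "I (\<lambda>\<omega>. 0) = 0"
  using I_PH[OF B0_const, of 0 0] by simp

lemma I_const: "I (\<lambda>\<omega>. c) = c"
  using I_CA[OF B0_const, of 0 c] I_zero by simp

lemma I_mono:
  assumes X: "X \<in> B0 M" and Y: "Y \<in> B0 M" and le: "\<And>\<omega>. \<omega> \<in> space M \<Longrightarrow> Y \<omega> \<le> X \<omega>"
  shows "I Y \<le> I X"
proof (rule I_SM[OF X Y])
  fix t
  have "{\<omega>\<in>space M. t \<le> Y \<omega>} \<subseteq> {\<omega>\<in>space M. t \<le> X \<omega>}" using le by (auto intro: order_trans)
  then show "prob {\<omega>\<in>space M. t \<le> Y \<omega>} \<le> prob {\<omega>\<in>space M. t \<le> X \<omega>}"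
    using B0_set_ge[OF X] by (intro finite_measure_mono) auto
qed

lemma I_strict:
  assumes X: "X \<in> B0 M" and Y: "Y \<in> B0 M" and le: "\<And>\<omega>. \<omega> \<in> space M \<Longrightarrow> Y \<omega> \<le> X \<omega>"
    and pos: "prob {\<omega>\<in>space M. Y \<omega> < X \<omega>} > 0"
  shows "I Y < I X"
proof -
  let ?V = "X ` space M"
  define G where "G x = {\<omega>\<in>space M. Y \<omega> < x \<and> x \<le> X \<omega>}" for x
  have Gev: "G x \<in> events" for x
  proof -
    have "G x = {\<omega>\<in>space M. Y \<omega> < x} \<inter> {\<omega>\<in>space M. x \<le> X \<omega>}" by (auto simp: G_def)
    then show ?thesis using B0_set_less[OF Y] B0_set_ge[OF X] by simp
  qed
  have sub: "{\<omega>\<in>space M. Y \<omega> < X \<omega>} \<subseteq> (\<Union>x\<in>?V. G x)" by (auto simp: G_def)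
  have "prob {\<omega>\<in>space M. Y \<omega> < X \<omega>} \<le> prob (\<Union>x\<in>?V. G x)"
    using sub Gev B0_fin[OF X] by (intro finite_measure_mono sets.finite_UN) auto
  also have "\<dots> \<le> (\<Sum>x\<in>?V. prob (G x))"
    using Gev B0_fin[OF X] by (intro finite_measure_subadditive_finite) auto
  finally have "(\<Sum>x\<in>?V. prob (G x)) > 0" using pos by simp
  then have "\<exists>x\<in>?V. prob (G x) > 0"
  proof (rule contrapos_pp)
    assume "\<not> (\<exists>x\<in>?V. prob (G x) > 0)"
    then have "\<forall>x\<in>?V. prob (G x) \<le> 0" by (simp add: not_less)
    then have "(\<Sum>x\<in>?V. prob (G x)) \<le> 0" by (intro sum_nonpos) auto
    then show "\<not> (\<Sum>x\<in>?V. prob (G x)) > 0" by simp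
  qed
  then obtain x where x: "prob (G x) > 0" by blast
  have un: "{\<omega>\<in>space M. x \<le> X \<omega>} = {\<omega>\<in>space M. x \<le> Y \<omega>} \<union> G x"
    using le by (auto simp: G_def intro: order_trans)
  have dj: "{\<omega>\<in>space M. x \<le> Y \<omega>} \<inter> G x = {}" by (auto simp: G_def)
  have "prob {\<omega>\<in>space M. x \<le> X \<omega>} = prob {\<omega>\<in>space M. x \<le> Y \<omega>} + prob (G x)"
    unfolding un using dj Gev B0_set_ge[OF Y] by (intro finite_measure_Union) auto
  then have st: "prob {\<omega>\<in>space M. x \<le> Y \<omega>} < prob {\<omega>\<in>space M. x \<le> X \<omega>}" using x by simp
  have dom: "prob {\<omega>\<in>space M. t \<le> Y \<omega>} \<le> prob {\<omega>\<in>space M. t \<le> X \<omega>}" for t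
  proof -
    have "{\<omega>\<in>space M. t \<le> Y \<omega>} \<subseteq> {\<omega>\<in>space M. t \<le> X \<omega>}" using le by (auto intro: order_trans)
    then show ?thesis using B0_set_ge[OF X] by (intro finite_measure_mono) auto
  qed
  show ?thesis by (rule I_SM_strict[OF X Y dom st])
qed

lemma I_le_const: "X \<in> B0 M \<Longrightarrow> (\<And>\<omega>. \<omega> \<in> space M \<Longrightarrow> X \<omega> \<le> c) \<Longrightarrow> I X \<le> c"
  using I_mono[OF B0_const, of X c] I_const by simp

lemma I_ge_const: "X \<in> B0 M \<Longrightarrow> (\<And>\<omega>. \<omega> \<in> space M \<Longrightarrow> c \<le> X \<omega>) \<Longrightarrow> c \<le> I X"
  using I_mono[OF _ B0_const, of X c] I_const by simp

lemma I_lip: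
  assumes X: "X \<in> B0 M" and Y: "Y \<in> B0 M" and d: "\<And>\<omega>. \<omega> \<in> space M \<Longrightarrow> \<bar>X \<omega> - Y \<omega>\<bar> \<le> \<delta>"
  shows "\<bar>I X - I Y\<bar> \<le> \<delta>"
proof -
  have d1: "X \<omega> \<le> Y \<omega> + \<delta>" "Y \<omega> \<le> X \<omega> + \<delta>" if "\<omega> \<in> space M" for \<omega>
    using d[OF that] unfolding abs_le_iff by linarith+
  have "I X \<le> I (\<lambda>\<omega>. Y \<omega> + \<delta>)"
    using d1 by (intro I_mono[OF B0_add[OF Y B0_const] X])
  moreover have "I Y \<le> I (\<lambda>\<omega>. X \<omega> + \<delta>)"
    using d1 by (intro I_mono[OF B0_add[OF X B0_const] Y])
  ultimately show ?thesis using I_CA[OF X, of \<delta>] I_CA[OF Y, of \<delta>] by (simp add: abs_le_iff)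
qed

lemma I_tl_law:
  assumes p: "part3 P1 P2 P3" and p': "part3 P1' P2' P3'"
    and e: "prob P1 = prob P1'" "prob P2 = prob P2'" "prob P3 = prob P3'"
  shows "I (tl a b c P1 P2 P3) = I (tl a b c P1' P2' P3')"
  using I_law[OF tl_B0[OF p] tl_B0[OF p']] tl_prob_ge[OF p] tl_prob_ge[OF p'] e by simp

definition KA :: "'a set \<Rightarrow> ('a \<Rightarrow> real) \<Rightarrow> bool" where
  "KA A Z \<longleftrightarrow> Z \<in> B0 M \<and> I Z = 0 \<and> {\<omega>\<in>space M. Z \<omega> < 0} = A"

lemma KA_add:
  assumes "KA A Z" "KA A W"
  shows "KA A (\<lambda>\<omega>. Z \<omega> + W \<omega>)"
proof -
  have Z: "Z \<in> B0 M" "I Z = 0" "{\<omega>\<in>space M. Z \<omega> < 0} = A" and W: "W \<in> B0 M" "I W = 0" "{\<omega>\<in>space M. W \<omega> < 0} = A"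
    using assms by (auto simp: KA_def)
  have "I (\<lambda>\<omega>. Z \<omega> + W \<omega>) = I Z + I W" using Z W by (intro I_CC) auto
  moreover have "{\<omega>\<in>space M. Z \<omega> + W \<omega> < 0} = A"
  proof -
    have iff: "Z \<omega> < 0 \<longleftrightarrow> W \<omega> < 0" if "\<omega> \<in> space M" for \<omega> using Z(3) W(3) that by blast
    have "Z \<omega> + W \<omega> < 0 \<longleftrightarrow> Z \<omega> < 0" if "\<omega> \<in> space M" for \<omega>
    proof (cases "Z \<omega> < 0")
      case True then have "W \<omega> < 0" using iff[OF that] by simp
      then show ?thesis using True by simp
    next
      case False then have "\<not> W \<omega> < 0" using iff[OF that] by simp
      then show ?thesis using False by simp
    qed
    then have "{\<omega>\<in>space M. Z \<omega> + W \<omega> < 0} = {\<omega>\<in>space M. Z \<omega> < 0}" by auto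
    then show ?thesis using Z by simp
  qed
  ultimately show ?thesis using Z W by (auto simp: KA_def)
qed

lemma KA_scale:
  assumes "KA A Z" "c > 0"
  shows "KA A (\<lambda>\<omega>. c * Z \<omega>)"
proof -
  have Z: "Z \<in> B0 M" "I Z = 0" "{\<omega>\<in>space M. Z \<omega> < 0} = A" using assms by (auto simp: KA_def)
  have "{\<omega>\<in>space M. c * Z \<omega> < 0} = {\<omega>\<in>space M. Z \<omega> < 0}" using assms(2) by (auto simp: mult_less_0_iff)
  then show ?thesis using Z assms(2) I_PH[OF Z(1), of c] B0_mult[OF B0_const Z(1)] by (simp add: KA_def)
qed

lemma KA_cong:
  assumes "KA A Z" "\<And>\<omega>. \<omega> \<in> space M \<Longrightarrow> W \<omega> = Z \<omega>"
  shows "KA A W"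
proof -
  have Z: "Z \<in> B0 M" "I Z = 0" "{\<omega>\<in>space M. Z \<omega> < 0} = A" using assms by (auto simp: KA_def)
  have "{\<omega>\<in>space M. W \<omega> < 0} = {\<omega>\<in>space M. Z \<omega> < 0}" using assms(2) by auto
  then show ?thesis using Z B0_cong[OF Z(1) assms(2)] I_cong[OF Z(1) assms(2)] by (simp add: KA_def)
qed

lemma KA_sum:
  assumes "finite U" "U \<noteq> {}" "\<And>x. x \<in> U \<Longrightarrow> KA A (T x)"
  shows "KA A (\<lambda>\<omega>. \<Sum>x\<in>U. T x \<omega>)"
  using assms
proof (induction U rule: finite_ne_induct)
  case (singleton x)
  then show ?case by simp
next
  case (insert x F)
  have "KA A (\<lambda>\<omega>. T x \<omega> + (\<Sum>y\<in>F. T y \<omega>))"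
    using insert by (intro KA_add) auto
  then show ?case using insert by simp
qed

end


locale axA = axI M I for M :: "'a measure" and I +
  fixes A :: "'a set"
  assumes Aev: "A \<in> events" and Apos: "0 < prob A" and Alt1: "prob A < 1"
begin

abbreviation "Ac \<equiv> space M - A"

definition "h = I (indicator Ac)"
definition "kap = h / ((1 - h) * prob Ac)"
definition "gg = (1 - h) / h"

lemma Acev: "Ac \<in> events" using Aev by simp
lemma q_eq: "prob Ac = 1 - prob A" using Aev by (simp add: prob_compl)
lemma q_pos: "0 < prob Ac" using q_eq Alt1 by simp
lemma Asub: "A \<subseteq> space M" using Aev sets.sets_into_space by blast

lemma h_pos: "0 < h"
proof -
  have "{\<omega>\<in>space M. (0::real) < indicator Ac \<omega>} = Ac" by (auto simp: indicator_def)
  then have "I (\<lambda>\<omega>. 0) < I (indicator Ac)"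
    using q_pos by (intro I_strict[OF B0_indicator[OF Acev] B0_const]) auto
  then show ?thesis by (simp add: h_def I_zero)
qed

lemma h_lt1: "h < 1"
proof -
  have "{\<omega>\<in>space M. indicator Ac \<omega> < (1::real)} = A" using Asub by (auto simp: indicator_def)
  then have "I (indicator Ac) < I (\<lambda>\<omega>. 1)"
    using Apos by (intro I_strict[OF B0_const B0_indicator[OF Acev]]) (auto simp: indicator_def)
  then show ?thesis by (simp add: h_def I_const)
qed

lemma kap_pos: "kap > 0" using h_pos h_lt1 q_pos by (simp add: kap_def)
lemma gg_pos: "gg > 0" using h_pos h_lt1 by (simp add: gg_def)

lemma two_val:
  assumes "a + b \<ge> 0"
  shows "I (\<lambda>\<omega>. a * indicator Ac \<omega> - b * indicator A \<omega>) = - b + (a + b) * h"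
proof -
  have X: "(\<lambda>\<omega>. (a + b) * indicator Ac \<omega> + (- b)) \<in> B0 M" by (intro B0_add B0_ind_cmult Acev B0_const)
  have "I (\<lambda>\<omega>. a * indicator Ac \<omega> - b * indicator A \<omega>) = I (\<lambda>\<omega>. (a + b) * indicator Ac \<omega> + (- b))"
    by (rule I_cong[OF X]) (auto simp: indicator_def algebra_simps)
  also have "\<dots> = I (\<lambda>\<omega>. (a + b) * indicator Ac \<omega>) + (- b)"
    by (rule I_CA) (intro B0_ind_cmult Acev)
  also have "I (\<lambda>\<omega>. (a + b) * indicator Ac \<omega>) = (a + b) * h"
    unfolding h_def using assms by (intro I_PH B0_indicator Acev)
  finally show ?thesis by simp
qed

lemma two_B0: "(\<lambda>\<omega>. a * indicator Ac \<omega> - b * indicator A \<omega>) \<in> B0 M"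
  by (intro B0_diff B0_ind_cmult Acev Aev)

lemma two_set:
  assumes "a + b > 0"
  shows "{\<omega>\<in>space M. a * indicator Ac \<omega> - b * indicator A \<omega> < I (\<lambda>\<omega>. a * indicator Ac \<omega> - b * indicator A \<omega>)} = A"
proof -
  have I: "I (\<lambda>\<omega>. a * indicator Ac \<omega> - b * indicator A \<omega>) = - b + (a + b) * h" using two_val assms by simp
  have 1: "- b < - b + (a + b) * h" using assms h_pos by simp
  have 2: "- b + (a + b) * h \<le> a"
  proof -
    have "(a + b) * h \<le> (a + b) * 1" using assms h_lt1 by (intro mult_left_mono) auto
    then show ?thesis by simp
  qed
  show ?thesis unfolding I using 1 2 Asub by (auto simp: indicator_def)
qed

lemma two_KA:
  assumes "0 \<le> a" "0 < b" "- b + (a + b) * h = 0"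
  shows "KA A (\<lambda>\<omega>. a * indicator Ac \<omega> - b * indicator A \<omega>)"
  using two_val[of a b] assms two_B0[of a b] Asub by (auto simp: KA_def indicator_def)

definition VD :: "'a set \<Rightarrow> real \<Rightarrow> 'a \<Rightarrow> real" where
  "VD D c = (\<lambda>\<omega>. indicator D \<omega> - c * indicator A \<omega>)"

lemma VD_B0: "D \<in> events \<Longrightarrow> VD D c \<in> B0 M"
  unfolding VD_def by (intro B0_diff B0_indicator B0_ind_cmult Aev)

lemma VD_tl:
  assumes "D \<in> events" "D \<subseteq> Ac"
  shows "part3 D (Ac - D) A" "\<And>\<omega>. \<omega> \<in> space M \<Longrightarrow> VD D c \<omega> = tl 1 0 (- c) D (Ac - D) A \<omega>"
  using assms Aev Asub by (auto simp: part3_def VD_def tl_def indicator_def)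

lemma VD_cont: "D \<in> events \<Longrightarrow> continuous_on UNIV (\<lambda>c. I (VD D c))"
proof -
  assume D: "D \<in> events"
  have "1-lipschitz_on UNIV (\<lambda>c. I (VD D c))"
  proof (rule lipschitz_onI)
    fix c c' :: real
    have "\<bar>I (VD D c) - I (VD D c')\<bar> \<le> \<bar>c - c'\<bar>"
      by (rule I_lip[OF VD_B0[OF D] VD_B0[OF D]]) (auto simp: VD_def indicator_def)
    then show "dist (I (VD D c)) (I (VD D c')) \<le> 1 * dist c c'" by (simp add: dist_real_def)
  qed simp
  then show ?thesis by (rule lipschitz_on_continuous_on)
qed

lemma VD_strict:
  assumes D: "D \<in> events" and cc: "c < c'"
  shows "I (VD D c') < I (VD D c)"
proof (rule I_strict[OF VD_B0[OF D] VD_B0[OF D]])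
  show "\<And>\<omega>. \<omega> \<in> space M \<Longrightarrow> VD D c' \<omega> \<le> VD D c \<omega>"
    using cc by (auto simp: VD_def indicator_def)
  have "{\<omega>\<in>space M. VD D c' \<omega> < VD D c \<omega>} = A" using cc Asub by (auto simp: VD_def indicator_def)
  then show "0 < prob {\<omega>\<in>space M. VD D c' \<omega> < VD D c \<omega>}" using Apos by simp
qed

lemma VD_ex:
  assumes D: "D \<in> events" "D \<subseteq> Ac"
  shows "\<exists>c. 0 \<le> c \<and> I (VD D c) = 0"
proof -
  define b where "b = h / (1 - h)"
  have b0: "0 \<le> b" using h_pos h_lt1 by (simp add: b_def)
  have f0: "0 \<le> I (VD D 0)"
    by (rule I_ge_const[OF VD_B0[OF D(1)]]) (auto simp: VD_def)
  have "I (VD D b) \<le> I (\<lambda>\<omega>. 1 * indicator Ac \<omega> - b * indicator A \<omega>)"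
    using D by (intro I_mono[OF two_B0 VD_B0[OF D(1)]]) (auto simp: VD_def indicator_def)
  also have "\<dots> = - b + (1 + b) * h" using b0 by (intro two_val) simp
  also have "\<dots> = 0" using h_lt1 by (simp add: b_def field_simps)
  finally have fb: "I (VD D b) \<le> 0" .
  obtain c where "0 \<le> c" "c \<le> b" "I (VD D c) = 0"
    using IVT2'[of "\<lambda>c. I (VD D c)" b 0 0] fb f0 b0 continuous_on_subset[OF VD_cont[OF D(1)]] by auto
  then show ?thesis by blast
qed

definition "Phi D = (THE c. I (VD D c) = 0)"

lemma Phi_unique: "D \<in> events \<Longrightarrow> I (VD D c) = 0 \<Longrightarrow> I (VD D c') = 0 \<Longrightarrow> c = c'"
  using VD_strict by (metis less_irrefl linorder_neqE_linordered_idom)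

lemma Phi:
  assumes D: "D \<in> events" "D \<subseteq> Ac"
  shows "I (VD D (Phi D)) = 0" "0 \<le> Phi D"
proof -
  obtain c where c: "0 \<le> c" "I (VD D c) = 0" using VD_ex[OF D] by blast
  have "Phi D = c" unfolding Phi_def using c Phi_unique[OF D(1)] by blast
  then show "I (VD D (Phi D)) = 0" "0 \<le> Phi D" using c by auto
qed

lemma Phi_eq: "D \<in> events \<Longrightarrow> D \<subseteq> Ac \<Longrightarrow> I (VD D c) = 0 \<Longrightarrow> Phi D = c"
  using Phi Phi_unique by metis

lemma Phi_pos:
  assumes D: "D \<in> events" "D \<subseteq> Ac" "prob D > 0"
  shows "Phi D > 0"
proof (rule ccontr)
  assume "\<not> Phi D > 0"
  then have z: "Phi D = 0" using Phi(2)[OF D(1,2)] by simp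
  have "{\<omega>\<in>space M. (0::real) < indicator D \<omega>} = D" using D sets.sets_into_space by (auto simp: indicator_def)
  then have "I (\<lambda>\<omega>. 0) < I (indicator D)"
    using D by (intro I_strict[OF B0_indicator[OF D(1)] B0_const]) auto
  moreover have "VD D 0 = indicator D" by (simp add: VD_def)
  ultimately show False using Phi(1)[OF D(1,2)] z I_zero by simp
qed

lemma KA_VD:
  assumes D: "D \<in> events" "D \<subseteq> Ac" "prob D > 0"
  shows "KA A (VD D (Phi D))"
  using Phi[OF D(1,2)] Phi_pos[OF D] VD_B0[OF D(1)] Asub D(2)
  unfolding KA_def by (auto simp: VD_def indicator_def)

lemma Phi_add:
  assumes D: "D \<in> events" "D \<subseteq> Ac" "prob D > 0" and D': "D' \<in> events" "D' \<subseteq> Ac" "prob D' > 0"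
    and dj: "D \<inter> D' = {}"
  shows "Phi (D \<union> D') = Phi D + Phi D'"
proof -
  have "KA A (\<lambda>\<omega>. VD D (Phi D) \<omega> + VD D' (Phi D') \<omega>)" by (intro KA_add KA_VD D D')
  then have k: "KA A (VD (D \<union> D') (Phi D + Phi D'))"
    by (rule KA_cong) (use dj in \<open>auto simp: VD_def indicator_def algebra_simps\<close>)
  show ?thesis using k D D' by (intro Phi_eq) (auto simp: KA_def)
qed

lemma Phi_mono:
  assumes D: "D \<in> events" "D \<subseteq> Ac" and D': "D' \<in> events" "D' \<subseteq> Ac" and le: "prob D \<le> prob D'"
  shows "Phi D \<le> Phi D'"
proof (rule ccontr)
  assume "\<not> Phi D \<le> Phi D'"
  then have lt: "Phi D' < Phi D" by simp
  let ?c = "Phi D"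
  have c0: "0 \<le> ?c" using Phi(2)[OF D] by simp
  have pD: "prob (Ac - D) = prob Ac - prob D" and pD': "prob (Ac - D') = prob Ac - prob D'"
    using D D' Acev by (auto simp: finite_measure_Diff)
  have dom: "prob {\<omega>\<in>space M. t \<le> VD D ?c \<omega>} \<le> prob {\<omega>\<in>space M. t \<le> VD D' ?c \<omega>}" for t
  proof -
    have e1: "{\<omega>\<in>space M. t \<le> VD D ?c \<omega>} = {\<omega>\<in>space M. t \<le> tl 1 0 (- ?c) D (Ac - D) A \<omega>}"
      using VD_tl(2)[OF D] by auto
    have e2: "{\<omega>\<in>space M. t \<le> VD D' ?c \<omega>} = {\<omega>\<in>space M. t \<le> tl 1 0 (- ?c) D' (Ac - D') A \<omega>}"
      using VD_tl(2)[OF D'] by auto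
    show ?thesis unfolding e1 e2 tl_prob_ge[OF VD_tl(1)[OF D]] tl_prob_ge[OF VD_tl(1)[OF D']] pD pD'
      using le c0 by auto
  qed
  have "I (VD D ?c) \<le> I (VD D' ?c)" by (rule I_SM[OF VD_B0[OF D'(1)] VD_B0[OF D(1)] dom])
  moreover have "I (VD D' ?c) < I (VD D' (Phi D'))" by (rule VD_strict[OF D'(1) lt])
  ultimately show False using Phi(1)[OF D] Phi(1)[OF D'] by simp
qed

lemma Phi_null:
  assumes D: "D \<in> events" "D \<subseteq> Ac" "prob D = 0"
  shows "Phi D = 0"
proof (rule Phi_eq[OF D(1,2)])
  have p0: "part3 {} Ac A" using Acev Aev Asub by (auto simp: part3_def)
  have pD: "prob (Ac - D) = prob Ac" using D Acev by (simp add: finite_measure_Diff)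
  have "I (tl 1 0 (- 0) D (Ac - D) A) = I (tl 1 0 (- 0) {} Ac A)"
    by (rule I_tl_law[OF VD_tl(1)[OF D(1,2)] p0]) (use D pD in auto)
  moreover have "I (VD D 0) = I (tl 1 0 (- 0) D (Ac - D) A)"
    by (rule I_cong[OF tl_B0[OF VD_tl(1)[OF D(1,2)]]]) (rule VD_tl(2)[OF D(1,2)])
  moreover have "I (tl 1 0 (- 0) {} Ac A) = 0"
    using I_cong[OF B0_const, of "tl 1 0 (- 0) {} Ac A" 0] I_zero by (simp add: tl_def)
  ultimately show "I (VD D 0) = 0" by simp
qed

lemma Phi_Ac: "Phi Ac = h / (1 - h)"
proof (rule Phi_eq[OF Acev])
  have "I (VD Ac (h / (1 - h))) = I (\<lambda>\<omega>. 1 * indicator Ac \<omega> - (h / (1 - h)) * indicator A \<omega>)"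
    by (simp add: VD_def)
  also have "\<dots> = - (h / (1 - h)) + (1 + h / (1 - h)) * h"
    using h_pos h_lt1 by (intro two_val) simp
  also have "\<dots> = 0" using h_lt1 by (simp add: field_simps)
  finally show "I (VD Ac (h / (1 - h))) = 0" .
qed simp

lemma Phi_lin:
  assumes D: "D \<in> events" "D \<subseteq> Ac"
  shows "Phi D = kap * prob D"
proof -
  have "Phi D = Phi Ac * prob D / prob Ac"
  proof (rule cauchy_sets[OF adq Acev q_pos _ _ _ D])
    show "\<And>D D'. D \<in> events \<Longrightarrow> D \<subseteq> Ac \<Longrightarrow> D' \<in> events \<Longrightarrow> D' \<subseteq> Ac \<Longrightarrow> prob D \<le> prob D' \<Longrightarrow> Phi D \<le> Phi D'"
      by (rule Phi_mono)
    show "\<And>D D'. D \<in> events \<Longrightarrow> D \<subseteq> Ac \<Longrightarrow> D' \<in> events \<Longrightarrow> D' \<subseteq> Ac \<Longrightarrow> D \<inter> D' = {} \<Longrightarrow>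
                0 < prob D \<Longrightarrow> 0 < prob D' \<Longrightarrow> Phi (D \<union> D') = Phi D + Phi D'"
      by (rule Phi_add)
    show "\<And>D. D \<in> events \<Longrightarrow> D \<subseteq> Ac \<Longrightarrow> prob D = 0 \<Longrightarrow> Phi D = 0"
      by (rule Phi_null)
  qed
  then show ?thesis unfolding Phi_Ac kap_def by simp
qed

end


context axA
begin

lemma AC:
  assumes W: "W \<in> B0 M" and nonneg: "\<And>\<omega>. \<omega> \<in> space M \<Longrightarrow> 0 \<le> W \<omega>"
    and zA: "\<And>\<omega>. \<omega> \<in> A \<Longrightarrow> W \<omega> = 0" and pos: "integral\<^sup>L M W > 0"
  shows "KA A (\<lambda>\<omega>. W \<omega> - kap * integral\<^sup>L M W * indicator A \<omega>)"
proof -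
  let ?V = "W ` space M"
  have finV: "finite ?V" using B0_fin[OF W] .
  define Dx where "Dx x = {\<omega>\<in>space M. W \<omega> = x}" for x
  have Dxev: "Dx x \<in> events" for x unfolding Dx_def by (rule B0_set_eq[OF W])
  define Vp where "Vp = {x\<in>?V. 0 < x \<and> 0 < prob (Dx x)}"
  define Vn where "Vn = {x\<in>?V. 0 < x \<and> prob (Dx x) = 0}"
  have finVp: "finite Vp" and finVn: "finite Vn" using finV by (auto simp: Vp_def Vn_def)
  define N where "N = (\<Union>x\<in>Vn. Dx x)"
  have Nev: "N \<in> events" unfolding N_def using finVn Dxev by (intro sets.finite_UN) auto
  have "prob N \<le> (\<Sum>x\<in>Vn. prob (Dx x))"
    unfolding N_def using finVn Dxev by (intro finite_measure_subadditive_finite) auto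
  also have "\<dots> = 0" by (simp add: Vn_def)
  finally have N0: "prob N = 0" using measure_nonneg[of M N] by linarith
  have EW: "integral\<^sup>L M W = (\<Sum>x\<in>?V. x * prob (Dx x))"
    using B0_integral[OF W, of "\<lambda>x. x"] by (simp add: Dx_def)
  also have "\<dots> = (\<Sum>x\<in>Vp. x * prob (Dx x))"
  proof (rule sum.mono_neutral_right[OF finV])
    show "Vp \<subseteq> ?V" by (auto simp: Vp_def)
    show "\<forall>x\<in>?V - Vp. x * prob (Dx x) = 0"
    proof
      fix x assume x: "x \<in> ?V - Vp"
      then have "0 \<le> x" using nonneg by auto
      moreover have "0 \<le> prob (Dx x)" by simp
      moreover have "\<not> (0 < x \<and> 0 < prob (Dx x))" using x by (auto simp: Vp_def)
      ultimately show "x * prob (Dx x) = 0" by (metis less_eq_real_def mult_eq_0_iff)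
    qed
  qed
  finally have EW: "integral\<^sup>L M W = (\<Sum>x\<in>Vp. x * prob (Dx x))" .
  have Vpne: "Vp \<noteq> {}" using EW pos by auto
  have DxAc: "Dx x \<subseteq> Ac" if "x \<in> Vp" for x
    using that zA by (auto simp: Dx_def Vp_def)
  define T where "T x = (\<lambda>\<omega>. x * VD (Dx x) (Phi (Dx x)) \<omega>)" for x
  have KT: "KA A (T x)" if x: "x \<in> Vp" for x
    unfolding T_def using x DxAc[OF x] Dxev by (intro KA_scale KA_VD) (auto simp: Vp_def)
  have Ks: "KA A (\<lambda>\<omega>. \<Sum>x\<in>Vp. T x \<omega>)" by (rule KA_sum[OF finVp Vpne KT])
  define Z where "Z = (\<lambda>\<omega>. W \<omega> - kap * integral\<^sup>L M W * indicator A \<omega>)"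
  have ZB: "Z \<in> B0 M" unfolding Z_def by (intro B0_diff W B0_ind_cmult Aev)
  have sumB: "(\<lambda>\<omega>. \<Sum>x\<in>Vp. T x \<omega>) \<in> B0 M" using Ks by (simp add: KA_def)
  have pt: "Z \<omega> = (\<Sum>x\<in>Vp. T x \<omega>)" if w: "\<omega> \<in> space M - N" for \<omega>
  proof -
    have sum1: "(\<Sum>x\<in>Vp. T x \<omega>) = (\<Sum>x\<in>Vp. x * indicator (Dx x) \<omega>) - kap * (\<Sum>x\<in>Vp. x * prob (Dx x)) * indicator A \<omega>"
    proof -
      have "(\<Sum>x\<in>Vp. T x \<omega>) = (\<Sum>x\<in>Vp. x * indicator (Dx x) \<omega> - (kap * (x * prob (Dx x))) * indicator A \<omega>)"
        using DxAc Dxev by (intro sum.cong refl) (auto simp: T_def VD_def Phi_lin algebra_simps)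
      also have "\<dots> = (\<Sum>x\<in>Vp. x * indicator (Dx x) \<omega>) - kap * (\<Sum>x\<in>Vp. x * prob (Dx x)) * indicator A \<omega>"
        by (simp add: sum_subtractf sum_distrib_left sum_distrib_right)
      finally show ?thesis .
    qed
    have sum2: "(\<Sum>x\<in>Vp. x * indicator (Dx x) \<omega>) = W \<omega>"
    proof (cases "W \<omega> \<in> Vp")
      case True
      have "(\<Sum>x\<in>Vp. x * indicator (Dx x) \<omega>) = (\<Sum>x\<in>Vp. x * (if W \<omega> = x then 1 else 0))"
        using w by (intro sum.cong refl) (auto simp: Dx_def indicator_def)
      also have "\<dots> = W \<omega>" by (rule sum_single_ind[OF finVp True])
      finally show ?thesis .
    next
      case False
      have z: "W \<omega> = 0"
      proof (rule ccontr)
        assume nz: "W \<omega> \<noteq> 0"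
        then have gt: "0 < W \<omega>" using nonneg w by force
        have inV: "W \<omega> \<in> ?V" using w by auto
        show False
        proof (cases "prob (Dx (W \<omega>)) = 0")
          case True
          then have "W \<omega> \<in> Vn" using gt inV by (simp add: Vn_def)
          then have "\<omega> \<in> N" using w by (auto simp: N_def Dx_def)
          then show False using w by simp
        next
          case False2: False
          then have "0 < prob (Dx (W \<omega>))" using measure_nonneg[of M "Dx (W \<omega>)"] by linarith
          then show False using False gt inV by (simp add: Vp_def)
        qed
      qed
      have "(\<Sum>x\<in>Vp. x * indicator (Dx x) \<omega>) = 0"
        using z by (intro sum.neutral) (auto simp: Dx_def Vp_def indicator_def)
      then show ?thesis using z by simp
    qed
    show ?thesis unfolding sum1 sum2 Z_def EW by simp
  qed
  have IZ: "I Z = 0"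
    using I_ae[OF ZB sumB Nev N0 pt] Ks by (simp add: KA_def)
  have setZ: "{\<omega>\<in>space M. Z \<omega> < 0} = A"
  proof -
    have "kap * integral\<^sup>L M W > 0" using kap_pos pos by simp
    then show ?thesis using nonneg zA Asub by (force simp: Z_def indicator_def)
  qed
  show ?thesis using ZB IZ setZ by (simp add: KA_def Z_def)
qed

end


context axA
begin

definition WE :: "real \<Rightarrow> 'a set \<Rightarrow> real \<Rightarrow> 'a \<Rightarrow> real" where
  "WE lam E d = (\<lambda>\<omega>. d * indicator Ac \<omega> - lam * indicator A \<omega> - indicator E \<omega>)"

lemma WE_B0: "E \<in> events \<Longrightarrow> WE lam E d \<in> B0 M"
  unfolding WE_def by (intro B0_diff B0_indicator B0_ind_cmult Aev Acev)

lemma WE_tl: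
  assumes "E \<in> events" "E \<subseteq> A"
  shows "part3 Ac E (A - E)" "\<And>\<omega>. \<omega> \<in> space M \<Longrightarrow> WE lam E d \<omega> = tl d (- lam - 1) (- lam) Ac E (A - E) \<omega>"
  using assms Aev Asub by (auto simp: part3_def WE_def tl_def indicator_def)

lemma WE_cont: "E \<in> events \<Longrightarrow> continuous_on UNIV (\<lambda>d. I (WE lam E d))"
proof -
  assume E: "E \<in> events"
  have "1-lipschitz_on UNIV (\<lambda>d. I (WE lam E d))"
  proof (rule lipschitz_onI)
    fix c c' :: real
    have "\<bar>I (WE lam E c) - I (WE lam E c')\<bar> \<le> \<bar>c - c'\<bar>"
      by (rule I_lip[OF WE_B0[OF E] WE_B0[OF E]]) (auto simp: WE_def indicator_def)
    then show "dist (I (WE lam E c)) (I (WE lam E c')) \<le> 1 * dist c c'" by (simp add: dist_real_def)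
  qed simp
  then show ?thesis by (rule lipschitz_on_continuous_on)
qed

lemma WE_strict:
  assumes E: "E \<in> events" and cc: "c < c'"
  shows "I (WE lam E c) < I (WE lam E c')"
proof (rule I_strict[OF WE_B0[OF E] WE_B0[OF E]])
  show "\<And>\<omega>. \<omega> \<in> space M \<Longrightarrow> WE lam E c \<omega> \<le> WE lam E c' \<omega>"
    using cc by (auto simp: WE_def indicator_def)
  have "{\<omega>\<in>space M. WE lam E c \<omega> < WE lam E c' \<omega>} = Ac" using cc by (auto simp: WE_def indicator_def)
  then show "0 < prob {\<omega>\<in>space M. WE lam E c \<omega> < WE lam E c' \<omega>}" using q_pos by simp
qed

lemma gg_h: "(gg + 1) * h = 1" using h_pos by (simp add: gg_def field_simps)

lemma WE_ex:
  assumes E: "E \<in> events" "E \<subseteq> A" and lam: "lam > 0"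
  shows "\<exists>d. 0 \<le> d \<and> I (WE lam E d) = 0"
proof -
  define b where "b = (lam + 1) * gg"
  have b0: "0 \<le> b" using lam gg_pos by (simp add: b_def)
  have f0: "I (WE lam E 0) \<le> 0"
    by (rule I_le_const[OF WE_B0[OF E(1)]]) (use lam in \<open>auto simp: WE_def indicator_def\<close>)
  have "I (\<lambda>\<omega>. b * indicator Ac \<omega> - (lam + 1) * indicator A \<omega>) \<le> I (WE lam E b)"
    using E lam by (intro I_mono[OF WE_B0[OF E(1)] two_B0]) (auto simp: WE_def indicator_def)
  moreover have "I (\<lambda>\<omega>. b * indicator Ac \<omega> - (lam + 1) * indicator A \<omega>) = - (lam + 1) + (b + (lam + 1)) * h"
    using b0 lam by (intro two_val) simp
  moreover have "- (lam + 1) + (b + (lam + 1)) * h = 0"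
  proof -
    have "(b + (lam + 1)) * h = (lam + 1) * ((gg + 1) * h)" by (simp add: b_def algebra_simps)
    then show ?thesis using gg_h by simp
  qed
  ultimately have fb: "0 \<le> I (WE lam E b)" by simp
  obtain d where "0 \<le> d" "d \<le> b" "I (WE lam E d) = 0"
    using IVT'[of "\<lambda>d. I (WE lam E d)" 0 0 b] fb f0 b0 continuous_on_subset[OF WE_cont[OF E(1)]] by auto
  then show ?thesis by blast
qed

definition "Psi lam E = (THE d. I (WE lam E d) = 0)"

lemma Psi_unique: "E \<in> events \<Longrightarrow> I (WE lam E c) = 0 \<Longrightarrow> I (WE lam E c') = 0 \<Longrightarrow> c = c'"
  using WE_strict by (metis less_irrefl linorder_neqE_linordered_idom)

lemma Psi:
  assumes E: "E \<in> events" "E \<subseteq> A" and lam: "lam > 0"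
  shows "I (WE lam E (Psi lam E)) = 0" "0 \<le> Psi lam E"
proof -
  obtain c where c: "0 \<le> c" "I (WE lam E c) = 0" using WE_ex[OF E lam] by blast
  have "Psi lam E = c" unfolding Psi_def using c Psi_unique[OF E(1)] by blast
  then show "I (WE lam E (Psi lam E)) = 0" "0 \<le> Psi lam E" using c by auto
qed

lemma Psi_eq: "E \<in> events \<Longrightarrow> E \<subseteq> A \<Longrightarrow> lam > 0 \<Longrightarrow> I (WE lam E c) = 0 \<Longrightarrow> Psi lam E = c"
  using Psi Psi_unique by metis

lemma KA_WE:
  assumes E: "E \<in> events" "E \<subseteq> A" and lam: "lam > 0"
  shows "KA A (WE lam E (Psi lam E))"
proof -
  have "{\<omega>\<in>space M. WE lam E (Psi lam E) \<omega> < 0} = A"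
    using Psi(2)[OF E lam] lam Asub E(2)
    by (auto simp: WE_def indicator_def)
  then show ?thesis using Psi(1)[OF E lam] WE_B0[OF E(1)] by (simp add: KA_def)
qed

lemma Psi_shift:
  assumes E: "E \<in> events" "E \<subseteq> A" and lam: "lam > 0" and mu: "mu > 0"
  shows "Psi (lam + mu) E = Psi lam E + mu * gg"
proof -
  have k2: "KA A (\<lambda>\<omega>. (mu * gg) * indicator Ac \<omega> - mu * indicator A \<omega>)"
  proof (rule two_KA)
    show "0 \<le> mu * gg" using mu gg_pos by simp
    show "0 < mu" by (rule mu)
    have "(mu * gg + mu) * h = mu * ((gg + 1) * h)" by (simp add: algebra_simps)
    then show "- mu + (mu * gg + mu) * h = 0" using gg_h by simp
  qed
  have "KA A (\<lambda>\<omega>. WE lam E (Psi lam E) \<omega> + ((mu * gg) * indicator Ac \<omega> - mu * indicator A \<omega>))"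
    by (intro KA_add KA_WE E lam k2)
  then have "KA A (WE (lam + mu) E (Psi lam E + mu * gg))"
    by (rule KA_cong) (auto simp: WE_def algebra_simps)
  then show ?thesis using E lam mu by (intro Psi_eq) (auto simp: KA_def)
qed

lemma Psi_add:
  assumes E: "E \<in> events" "E \<subseteq> A" and E': "E' \<in> events" "E' \<subseteq> A" and dj: "E \<inter> E' = {}" and lam: "lam > 0"
  shows "Psi (2 * lam) (E \<union> E') = Psi lam E + Psi lam E'"
proof -
  have "KA A (\<lambda>\<omega>. WE lam E (Psi lam E) \<omega> + WE lam E' (Psi lam E') \<omega>)"
    by (intro KA_add KA_WE E E' lam)
  then have "KA A (WE (2 * lam) (E \<union> E') (Psi lam E + Psi lam E'))"
    by (rule KA_cong) (use dj in \<open>auto simp: WE_def indicator_def algebra_simps\<close>)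
  then show ?thesis using E E' lam by (intro Psi_eq) (auto simp: KA_def)
qed

definition "chi E = Psi 1 E - gg"

lemma Psi_chi:
  assumes E: "E \<in> events" "E \<subseteq> A" and lam: "lam > 0"
  shows "Psi lam E = chi E + lam * gg"
proof (cases "lam = 1")
  case True then show ?thesis by (simp add: chi_def)
next
  case False
  show ?thesis
  proof (cases "lam < 1")
    case True
    have "Psi (lam + (1 - lam)) E = Psi lam E + (1 - lam) * gg" using True by (intro Psi_shift E lam) simp
    then show ?thesis by (simp add: chi_def algebra_simps)
  next
    case False2: False
    then have "1 < lam" using False by simp
    then have "Psi (1 + (lam - 1)) E = Psi 1 E + (lam - 1) * gg" by (intro Psi_shift E) auto
    then show ?thesis by (simp add: chi_def algebra_simps)
  qed
qed

lemma chi_add: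
  assumes E: "E \<in> events" "E \<subseteq> A" and E': "E' \<in> events" "E' \<subseteq> A" and dj: "E \<inter> E' = {}"
  shows "chi (E \<union> E') = chi E + chi E'"
proof -
  have "Psi (2 * 1) (E \<union> E') = Psi 1 E + Psi 1 E'" by (rule Psi_add[OF E E' dj]) simp
  moreover have "Psi 2 (E \<union> E') = chi (E \<union> E') + 2 * gg" using E E' by (intro Psi_chi) auto
  ultimately show ?thesis by (simp add: chi_def)
qed

lemma chi_mono:
  assumes E: "E \<in> events" "E \<subseteq> A" and E': "E' \<in> events" "E' \<subseteq> A" and le: "prob E \<le> prob E'"
  shows "chi E \<le> chi E'"
proof -
  have "Psi 1 E \<le> Psi 1 E'"
  proof (rule ccontr)
    assume "\<not> ?thesis"
    then have lt: "Psi 1 E' < Psi 1 E" by simp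
    let ?d = "Psi 1 E"
    have pE: "prob (A - E) = prob A - prob E" and pE': "prob (A - E') = prob A - prob E'"
      using E E' Aev by (auto simp: finite_measure_Diff)
    have dom: "prob {\<omega>\<in>space M. t \<le> WE 1 E' ?d \<omega>} \<le> prob {\<omega>\<in>space M. t \<le> WE 1 E ?d \<omega>}" for t
    proof -
      have e1: "{\<omega>\<in>space M. t \<le> WE 1 E ?d \<omega>} = {\<omega>\<in>space M. t \<le> tl ?d (- 1 - 1) (- 1) Ac E (A - E) \<omega>}"
        using WE_tl(2)[OF E] by auto
      have e2: "{\<omega>\<in>space M. t \<le> WE 1 E' ?d \<omega>} = {\<omega>\<in>space M. t \<le> tl ?d (- 1 - 1) (- 1) Ac E' (A - E') \<omega>}"
        using WE_tl(2)[OF E'] by auto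
      show ?thesis unfolding e1 e2 tl_prob_ge[OF WE_tl(1)[OF E]] tl_prob_ge[OF WE_tl(1)[OF E']] pE pE'
        using le by auto
    qed
    have "I (WE 1 E' ?d) \<le> I (WE 1 E ?d)" by (rule I_SM[OF WE_B0[OF E(1)] WE_B0[OF E'(1)] dom])
    moreover have "I (WE 1 E' (Psi 1 E')) < I (WE 1 E' ?d)" by (rule WE_strict[OF E'(1) lt])
    ultimately show False using Psi(1)[OF E] Psi(1)[OF E'] by simp
  qed
  then show ?thesis by (simp add: chi_def)
qed

lemma chi_null:
  assumes E: "E \<in> events" "E \<subseteq> A" "prob E = 0"
  shows "chi E = 0"
proof -
  have "Psi 1 E = gg"
  proof (rule Psi_eq[OF E(1,2)])
    have p0: "part3 Ac {} A" using Acev Aev Asub by (auto simp: part3_def)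
    have pE: "prob (A - E) = prob A" using E Aev by (simp add: finite_measure_Diff)
    have "I (tl gg (- 1 - 1) (- 1) Ac E (A - E)) = I (tl gg (- 1 - 1) (- 1) Ac {} A)"
      by (rule I_tl_law[OF WE_tl(1)[OF E(1,2)] p0]) (use E pE in auto)
    moreover have "I (WE 1 E gg) = I (tl gg (- 1 - 1) (- 1) Ac E (A - E))"
      by (rule I_cong[OF tl_B0[OF WE_tl(1)[OF E(1,2)]]]) (rule WE_tl(2)[OF E(1,2)])
    moreover have "I (tl gg (- 1 - 1) (- 1) Ac {} A) = I (\<lambda>\<omega>. gg * indicator Ac \<omega> - 1 * indicator A \<omega>)"
      by (rule I_cong[OF two_B0]) (simp add: tl_def)
    moreover have "I (\<lambda>\<omega>. gg * indicator Ac \<omega> - 1 * indicator A \<omega>) = - 1 + (gg + 1) * h"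
      using gg_pos by (intro two_val) simp
    ultimately show "I (WE 1 E gg) = 0" using gg_h by simp
  qed simp
  then show ?thesis by (simp add: chi_def)
qed

lemma chi_A: "chi A = gg"
proof -
  have "Psi 1 A = 2 * gg"
  proof (rule Psi_eq[OF Aev order_refl])
    have "I (WE 1 A (2 * gg)) = I (\<lambda>\<omega>. (2 * gg) * indicator Ac \<omega> - 2 * indicator A \<omega>)"
      by (rule I_cong[OF two_B0]) (simp add: WE_def)
    also have "\<dots> = - 2 + (2 * gg + 2) * h" using gg_pos by (intro two_val) simp
    also have "\<dots> = 0"
    proof -
      have "(2 * gg + 2) * h = 2 * ((gg + 1) * h)" by (simp add: algebra_simps)
      then show ?thesis using gg_h by simp
    qed
    finally show "I (WE 1 A (2 * gg)) = 0" .
  qed simp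
  then show ?thesis by (simp add: chi_def)
qed

lemma chi_lin:
  assumes E: "E \<in> events" "E \<subseteq> A"
  shows "chi E = gg * prob E / prob A"
proof -
  have "chi E = chi A * prob E / prob A"
  proof (rule cauchy_sets[OF adq Aev Apos _ _ _ E])
    show "\<And>D D'. D \<in> events \<Longrightarrow> D \<subseteq> A \<Longrightarrow> D' \<in> events \<Longrightarrow> D' \<subseteq> A \<Longrightarrow> prob D \<le> prob D' \<Longrightarrow> chi D \<le> chi D'"
      by (rule chi_mono)
    show "\<And>D D'. D \<in> events \<Longrightarrow> D \<subseteq> A \<Longrightarrow> D' \<in> events \<Longrightarrow> D' \<subseteq> A \<Longrightarrow> D \<inter> D' = {} \<Longrightarrow>
                0 < prob D \<Longrightarrow> 0 < prob D' \<Longrightarrow> chi (D \<union> D') = chi D + chi D'"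
      by (rule chi_add)
    show "\<And>D. D \<in> events \<Longrightarrow> D \<subseteq> A \<Longrightarrow> prob D = 0 \<Longrightarrow> chi D = 0"
      by (rule chi_null)
  qed
  then show ?thesis unfolding chi_A .
qed

lemma shape_KA:
  assumes E: "E \<in> events" "E \<subseteq> A" and lam: "lam > 0" and r: "r \<ge> 0"
  shows "KA A (\<lambda>\<omega>. (gg * (lam + r * prob E / prob A)) * indicator Ac \<omega> - lam * indicator A \<omega> - r * indicator E \<omega>)"
proof (cases "r = 0")
  case True
  have "KA A (\<lambda>\<omega>. (gg * lam) * indicator Ac \<omega> - lam * indicator A \<omega>)"
  proof (rule two_KA)
    show "0 \<le> gg * lam" using gg_pos lam by simp
    show "0 < lam" by (rule lam)
    have "(gg * lam + lam) * h = lam * ((gg + 1) * h)" by (simp add: algebra_simps)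
    then show "- lam + (gg * lam + lam) * h = 0" using gg_h by simp
  qed
  then show ?thesis using True by simp
next
  case False
  then have r0: "r > 0" using r by simp
  have k: "KA A (\<lambda>\<omega>. r * WE (lam / r) E (Psi (lam / r) E) \<omega>)"
    using lam r0 by (intro KA_scale KA_WE E) auto
  have ps: "Psi (lam / r) E = gg * prob E / prob A + (lam / r) * gg"
    using Psi_chi[OF E, of "lam / r"] chi_lin[OF E] lam r0 by simp
  show ?thesis
  proof (rule KA_cong[OF k])
    fix \<omega>
    show "gg * (lam + r * prob E / prob A) * indicator Ac \<omega> - lam * indicator A \<omega> - r * indicator E \<omega> =
        r * WE (lam / r) E (Psi (lam / r) E) \<omega>"
      unfolding ps WE_def using r0 Apos by (simp add: field_simps)
  qed
qed

end


context axA
begin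

lemma U_sums:
  assumes U: "U \<in> B0 M" and posA: "\<And>\<omega>. \<omega> \<in> A \<Longrightarrow> 0 < U \<omega>" and zAc: "\<And>\<omega>. \<omega> \<in> Ac \<Longrightarrow> U \<omega> = 0"
  shows "(\<Sum>x\<in>U ` A. prob {\<omega>\<in>space M. U \<omega> = x}) = prob A"
    and "(\<Sum>x\<in>U ` A. x * prob {\<omega>\<in>space M. U \<omega> = x}) = integral\<^sup>L M U"
proof -
  have finS: "finite (U ` space M)" using B0_fin[OF U] .
  have sub: "U ` A \<subseteq> U ` space M" using Asub by auto
  have rest: "x = 0" if "x \<in> U ` space M - U ` A" for x
    using that zAc by auto
  have "integral\<^sup>L M U = (\<Sum>x\<in>U ` space M. x * prob {\<omega>\<in>space M. U \<omega> = x})"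
    using B0_integral[OF U, of "\<lambda>x. x"] by simp
  also have "\<dots> = (\<Sum>x\<in>U ` A. x * prob {\<omega>\<in>space M. U \<omega> = x})"
  proof (intro sum.mono_neutral_right[OF finS sub] ballI)
    fix x assume "x \<in> U ` space M - U ` A"
    then have "x = 0" by (rule rest)
    then show "x * prob {\<omega>\<in>space M. U \<omega> = x} = 0" by simp
  qed
  finally show "(\<Sum>x\<in>U ` A. x * prob {\<omega>\<in>space M. U \<omega> = x}) = integral\<^sup>L M U" by simp
  have "(\<integral>\<omega>. (if 0 < U \<omega> then 1 else 0) \<partial>M) = (\<Sum>x\<in>U ` space M. (if 0 < x then 1 else 0) * prob {\<omega>\<in>space M. U \<omega> = x})"
    using B0_integral[OF U, of "\<lambda>x. if 0 < x then 1 else 0"] by simp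
  also have "\<dots> = (\<Sum>x\<in>U ` A. (if 0 < x then 1 else 0) * prob {\<omega>\<in>space M. U \<omega> = x})"
  proof (intro sum.mono_neutral_right[OF finS sub] ballI)
    fix x assume "x \<in> U ` space M - U ` A"
    then have "x = 0" by (rule rest)
    then show "(if 0 < x then 1 else 0) * prob {\<omega>\<in>space M. U \<omega> = x} = 0" by simp
  qed
  also have "\<dots> = (\<Sum>x\<in>U ` A. prob {\<omega>\<in>space M. U \<omega> = x})"
    using posA by (intro sum.cong) auto
  finally have e: "(\<integral>\<omega>. (if 0 < U \<omega> then 1 else 0) \<partial>M) = (\<Sum>x\<in>U ` A. prob {\<omega>\<in>space M. U \<omega> = x})" .
  have "(\<integral>\<omega>. (if 0 < U \<omega> then 1 else 0) \<partial>M) = (\<integral>\<omega>. indicator A \<omega> \<partial>M)"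
  proof (intro Bochner_Integration.integral_cong refl)
    fix \<omega> assume w: "\<omega> \<in> space M"
    show "(if 0 < U \<omega> then 1 else 0) = indicator A \<omega>"
    proof (cases "\<omega> \<in> A")
      case True then show ?thesis using posA[OF True] by simp
    next
      case False then have "U \<omega> = 0" using zAc w by simp
      then show ?thesis using False by simp
    qed
  qed
  also have "\<dots> = prob A" using Aev Asub by (simp add: Int_absorb2)
  finally show "(\<Sum>x\<in>U ` A. prob {\<omega>\<in>space M. U \<omega> = x}) = prob A" using e by simp
qed

lemma AS:
  assumes U: "U \<in> B0 M" and posA: "\<And>\<omega>. \<omega> \<in> A \<Longrightarrow> 0 < U \<omega>" and zAc: "\<And>\<omega>. \<omega> \<in> Ac \<Longrightarrow> U \<omega> = 0"
  shows "KA A (\<lambda>\<omega>. (gg / prob A * integral\<^sup>L M U) * indicator Ac \<omega> - U \<omega>)"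
proof -
  let ?V = "U ` A"
  have finV: "finite ?V" using B0_fin[OF U] Asub by (meson finite_subset image_mono)
  have Ane: "A \<noteq> {}" using Apos by auto
  then have Vne: "?V \<noteq> {}" by simp
  define m where "m = Min ?V"
  define n where "n = card ?V"
  have m0: "0 < m" using finV Vne posA by (auto simp: m_def)
  have n0: "0 < n" using finV Vne by (simp add: n_def card_gt_0_iff)
  have mle: "m \<le> x" if "x \<in> ?V" for x using finV that by (simp add: m_def)
  define Ex where "Ex x = {\<omega>\<in>space M. U \<omega> = x}" for x
  have Exev: "Ex x \<in> events" for x unfolding Ex_def by (rule B0_set_eq[OF U])
  have ExA: "Ex x \<subseteq> A" if "x \<in> ?V" for x
  proof -
    have "0 < x" using that posA by auto
    then show ?thesis using zAc by (auto simp: Ex_def) (metis less_irrefl)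
  qed
  define d where "d x = gg * (m / n + (x - m) * prob (Ex x) / prob A)" for x
  define T where "T x = (\<lambda>\<omega>. d x * indicator Ac \<omega> - (m / n) * indicator A \<omega> - (x - m) * indicator (Ex x) \<omega>)" for x
  have KT: "KA A (T x)" if x: "x \<in> ?V" for x
    unfolding T_def d_def using Exev ExA[OF x] m0 n0 mle[OF x] by (intro shape_KA) auto
  have Ks: "KA A (\<lambda>\<omega>. \<Sum>x\<in>?V. T x \<omega>)" by (rule KA_sum[OF finV Vne KT])
  have S1: "(\<Sum>x\<in>?V. prob (Ex x)) = prob A" using U_sums(1)[OF U posA zAc] by (simp add: Ex_def)
  have S2: "(\<Sum>x\<in>?V. x * prob (Ex x)) = integral\<^sup>L M U" using U_sums(2)[OF U posA zAc] by (simp add: Ex_def)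
  have Dsum: "(\<Sum>x\<in>?V. d x) = gg / prob A * integral\<^sup>L M U"
  proof -
    have dx: "d x = gg * (m / n) + (gg / prob A) * (x * prob (Ex x)) - (gg / prob A) * m * prob (Ex x)" for x
      unfolding d_def using Apos by (simp add: field_simps)
    have "(\<Sum>x\<in>?V. d x) = (\<Sum>x\<in>?V. gg * (m / n)) + (gg / prob A) * (\<Sum>x\<in>?V. x * prob (Ex x)) - (gg / prob A) * m * (\<Sum>x\<in>?V. prob (Ex x))"
      unfolding dx by (simp add: sum.distrib sum_subtractf sum_distrib_left)
    also have "(\<Sum>x\<in>?V. gg * (m / n)) = gg * m" using n0 by (simp add: n_def)
    finally have "(\<Sum>x\<in>?V. d x) = gg * m + (gg / prob A) * integral\<^sup>L M U - (gg / prob A) * m * prob A"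
      unfolding S1 S2 .
    then show ?thesis using Apos by simp
  qed
  show ?thesis
  proof (rule KA_cong[OF Ks])
    fix \<omega> assume w: "\<omega> \<in> space M"
    have "(\<Sum>x\<in>?V. T x \<omega>) = (\<Sum>x\<in>?V. d x) * indicator Ac \<omega> - (\<Sum>x\<in>?V. m / n) * indicator A \<omega> - (\<Sum>x\<in>?V. (x - m) * indicator (Ex x) \<omega>)"
      by (simp add: T_def sum_subtractf sum_distrib_right)
    also have "(\<Sum>x\<in>?V. m / n) = m" using n0 by (simp add: n_def)
    finally have e1: "(\<Sum>x\<in>?V. T x \<omega>) = (\<Sum>x\<in>?V. d x) * indicator Ac \<omega> - m * indicator A \<omega> - (\<Sum>x\<in>?V. (x - m) * indicator (Ex x) \<omega>)" .
    show "gg / prob A * integral\<^sup>L M U * indicator Ac \<omega> - U \<omega> = (\<Sum>x\<in>?V. T x \<omega>)"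
    proof (cases "\<omega> \<in> A")
      case True
      have inV: "U \<omega> \<in> ?V" using True by auto
      have "(\<Sum>x\<in>?V. (x - m) * indicator (Ex x) \<omega>) = (\<Sum>x\<in>?V. (x - m) * (if U \<omega> = x then 1 else 0))"
        using w by (intro sum.cong refl) (auto simp: Ex_def indicator_def)
      also have "\<dots> = U \<omega> - m" by (rule sum_single_ind[OF finV inV])
      finally show ?thesis unfolding e1 using True by (simp add: indicator_def)
    next
      case False
      have "(\<Sum>x\<in>?V. (x - m) * indicator (Ex x) \<omega>) = 0"
        using False ExA by (intro sum.neutral) (auto simp: indicator_def)
      then show ?thesis unfolding e1 using False w zAc Dsum by (simp add: indicator_def)
    qed
  qed
qed

definition "rho = prob Ac * (1 - h) / (prob A * h)"

lemma rho_pos: "rho > 0" using q_pos Apos h_pos h_lt1 by (simp add: rho_def)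

lemma KL:
  assumes Z: "Z \<in> B0 M" and IZ: "I Z = 0" and setZ: "{\<omega>\<in>space M. Z \<omega> < 0} = A"
  shows "(\<integral>\<omega>. max (Z \<omega>) 0 \<partial>M) = rho * (\<integral>\<omega>. max (- Z \<omega>) 0 \<partial>M)"
proof -
  define W where "W = (\<lambda>\<omega>. max (Z \<omega>) 0)"
  define U where "U = (\<lambda>\<omega>. max (- Z \<omega>) 0)"
  have WB: "W \<in> B0 M" unfolding W_def by (rule B0_comp[OF Z])
  have UB: "U \<in> B0 M" unfolding U_def by (rule B0_comp[OF Z])
  have inA: "\<omega> \<in> A \<longleftrightarrow> Z \<omega> < 0" if "\<omega> \<in> space M" for \<omega> using setZ that by blast
  have Wn: "\<And>\<omega>. \<omega> \<in> space M \<Longrightarrow> 0 \<le> W \<omega>" by (simp add: W_def)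
  have WA: "\<And>\<omega>. \<omega> \<in> A \<Longrightarrow> W \<omega> = 0" using inA Asub by (auto simp: W_def)
  have UA: "\<And>\<omega>. \<omega> \<in> A \<Longrightarrow> 0 < U \<omega>" using inA Asub by (auto simp: U_def)
  have UAc: "\<And>\<omega>. \<omega> \<in> Ac \<Longrightarrow> U \<omega> = 0" using inA by (auto simp: U_def)
  have ZWU: "Z \<omega> = W \<omega> - U \<omega>" for \<omega> by (simp add: W_def U_def max_def)
    have EU: "integral\<^sup>L M U > 0"
  proof -
    have finV: "finite (U ` A)" using B0_fin[OF UB] Asub by (meson finite_subset image_mono)
    have Vne: "U ` A \<noteq> {}" using Apos by auto
    define c where "c = Min (U ` A)"
    have c0: "0 < c" using finV Vne UA by (auto simp: c_def)
    have "(\<integral>\<omega>. c * indicator A \<omega> \<partial>M) \<le> integral\<^sup>L M U"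
    proof (rule integral_mono)
      show "integrable M (\<lambda>\<omega>. c * indicator A \<omega>)" using Aev
        by (intro integrable_mult_right integrable_real_indicator) (auto simp: emeasure_eq_measure)
      show "integrable M U" using B0_integrable[OF UB, of "\<lambda>x. x"] by simp
      fix \<omega> assume "\<omega> \<in> space M"
      then show "c * indicator A \<omega> \<le> U \<omega>"
        using finV UA UAc by (cases "\<omega> \<in> A") (auto simp: c_def indicator_def)
    qed
    moreover have "(\<integral>\<omega>. c * indicator A \<omega> \<partial>M) = c * prob A" using Aev Asub by (simp add: Int_absorb2)
    ultimately show ?thesis using c0 Apos by (smt (verit) mult_pos_pos)
  qed
    have EW: "integral\<^sup>L M W > 0"
  proof (rule ccontr)
    assume "\<not> ?thesis"
    have EWe: "integral\<^sup>L M W = (\<Sum>x\<in>W ` space M. x * prob {\<omega>\<in>space M. W \<omega> = x})"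
      using B0_integral[OF WB, of "\<lambda>x. x"] by simp
    have tn: "\<And>x. x \<in> W ` space M \<Longrightarrow> 0 \<le> x * prob {\<omega>\<in>space M. W \<omega> = x}" using Wn by auto
    have "0 \<le> integral\<^sup>L M W" unfolding EWe by (intro sum_nonneg tn)
    then have "integral\<^sup>L M W = 0" using \<open>\<not> _\<close> by simp
    then have allz: "\<forall>x\<in>W ` space M. x * prob {\<omega>\<in>space M. W \<omega> = x} = 0"
      using sum_nonneg_eq_0_iff[OF B0_fin[OF WB] tn] EWe by simp
    define N where "N = (\<Union>x\<in>W ` space M - {0}. {\<omega>\<in>space M. W \<omega> = x})"
    have Nev: "N \<in> events" unfolding N_def using B0_fin[OF WB] B0_set_eq[OF WB] by (intro sets.finite_UN) auto
    have "prob N \<le> (\<Sum>x\<in>W ` space M - {0}. prob {\<omega>\<in>space M. W \<omega> = x})"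
      unfolding N_def using B0_fin[OF WB] B0_set_eq[OF WB] by (intro finite_measure_subadditive_finite) auto
    also have "\<dots> = 0" using allz by (intro sum.neutral) auto
    finally have N0: "prob N = 0" using measure_nonneg[of M N] by linarith
    have mU: "(\<lambda>\<omega>. - U \<omega>) \<in> B0 M" using B0_comp[OF UB, of uminus] by simp
    have "I Z = I (\<lambda>\<omega>. - U \<omega>)"
    proof (rule I_ae[OF Z mU Nev N0])
      fix \<omega> assume w: "\<omega> \<in> space M - N"
      then have "W \<omega> = 0" by (auto simp: N_def)
      then show "Z \<omega> = - U \<omega>" using ZWU by simp
    qed
    also have "\<dots> < I (\<lambda>\<omega>. 0)"
    proof (rule I_strict[OF B0_const mU])
      show "\<And>\<omega>. \<omega> \<in> space M \<Longrightarrow> - U \<omega> \<le> 0" by (simp add: U_def)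
      have "{\<omega>\<in>space M. - U \<omega> < 0} = A" using UA UAc Asub by force
      then show "0 < prob {\<omega>\<in>space M. - U \<omega> < 0}" using Apos by simp
    qed
    finally show False using IZ I_zero by simp
  qed
  define c where "c = kap * integral\<^sup>L M W"
  define d where "d = gg / prob A * integral\<^sup>L M U"
  have c0: "c > 0" using kap_pos EW by (simp add: c_def)
  have d0: "d > 0" using gg_pos EU Apos by (simp add: d_def)
  have K1: "KA A (\<lambda>\<omega>. W \<omega> - c * indicator A \<omega>)" unfolding c_def by (rule AC[OF WB Wn WA EW])
  have K2: "KA A (\<lambda>\<omega>. d * indicator Ac \<omega> - U \<omega>)" unfolding d_def by (rule AS[OF UB UA UAc])
  define T where "T = (\<lambda>\<omega>. d * indicator Ac \<omega> - c * indicator A \<omega>)"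
  have TB: "T \<in> B0 M" unfolding T_def by (rule two_B0)
  have "KA A (\<lambda>\<omega>. (W \<omega> - c * indicator A \<omega>) + (d * indicator Ac \<omega> - U \<omega>))" by (rule KA_add[OF K1 K2])
  then have K3: "KA A (\<lambda>\<omega>. Z \<omega> + T \<omega>)" by (rule KA_cong) (simp add: ZWU T_def)
  have setT: "{\<omega>\<in>space M. T \<omega> < I T} = A" unfolding T_def using c0 d0 by (intro two_set) simp
  have "I (\<lambda>\<omega>. Z \<omega> + T \<omega>) = I Z + I T" using setZ setT IZ by (intro I_CC[OF Z TB]) simp
  then have IT: "I T = 0" using K3 IZ by (simp add: KA_def)
  have "I T = - c + (d + c) * h" unfolding T_def using c0 d0 by (intro two_val) simp
  then have eq: "c * (1 - h) = d * h" using IT by (simp add: algebra_simps)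
  have k1: "kap * (1 - h) = h / prob Ac" using h_lt1 by (simp add: kap_def)
  have g1: "gg * h = 1 - h" using h_pos by (simp add: gg_def)
  have "c * (1 - h) = integral\<^sup>L M W * (kap * (1 - h))" by (simp add: c_def)
  also have "\<dots> = integral\<^sup>L M W * h / prob Ac" unfolding k1 by simp
  finally have l: "c * (1 - h) = integral\<^sup>L M W * h / prob Ac" .
  have "d * h = integral\<^sup>L M U * (gg * h) / prob A" by (simp add: d_def)
  also have "\<dots> = integral\<^sup>L M U * (1 - h) / prob A" unfolding g1 ..
  finally have r: "d * h = integral\<^sup>L M U * (1 - h) / prob A" .
  have "integral\<^sup>L M W * h / prob Ac = integral\<^sup>L M U * (1 - h) / prob A" using eq l r by simp
  then have "integral\<^sup>L M W = rho * integral\<^sup>L M U"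
    using h_pos q_pos Apos by (simp add: rho_def field_simps)
  then show ?thesis by (simp add: W_def U_def)
qed

end


context axI
begin

definition "rhoA A = prob (space M - A) * (1 - I (indicator (space M - A))) / (prob A * I (indicator (space M - A)))"

lemma axA_inst: "A \<in> events \<Longrightarrow> 0 < prob A \<Longrightarrow> prob A < 1 \<Longrightarrow> axA M I A"
  by unfold_locales auto

lemma rhoA_eq: assumes "A \<in> events" "0 < prob A" "prob A < 1" shows "axA.rho M I A = rhoA A"
proof -
  interpret axA M I A by (rule axA_inst[OF assms])
  show ?thesis by (simp add: rho_def h_def rhoA_def)
qed

lemma rhoA_pos: assumes "A \<in> events" "0 < prob A" "prob A < 1" shows "rhoA A > 0"
proof -
  interpret axA M I A by (rule axA_inst[OF assms])
  show ?thesis using rho_pos rhoA_eq[OF assms] by simp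
qed

lemma rhoA_law:
  assumes A: "A \<in> events" and A': "A' \<in> events" and e: "prob A = prob A'"
  shows "rhoA A = rhoA A'"
proof -
  have p: "part3 (space M - A) A {}" and p': "part3 (space M - A') A' {}"
    using A A' sets.sets_into_space by (auto simp: part3_def)
  have i: "indicator (space M - S) \<omega> = tl 1 0 0 (space M - S) S {} \<omega>" if "\<omega> \<in> space M" for S \<omega>
    by (simp add: tl_def)
  have "I (indicator (space M - A)) = I (tl 1 0 0 (space M - A) A {})"
    by (rule I_cong[OF tl_B0[OF p]]) (rule i)
  also have "\<dots> = I (tl 1 0 0 (space M - A') A' {})"
    by (rule I_tl_law[OF p p']) (use A A' e in \<open>auto simp: prob_compl\<close>)
  also have "\<dots> = I (indicator (space M - A'))"
    by (rule I_cong[OF tl_B0[OF p'], symmetric]) (rule i)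
  finally show ?thesis using A A' e by (simp add: rhoA_def prob_compl)
qed

lemma rhoA_const_lt:
  assumes A1: "A1 \<in> events" and A2: "A2 \<in> events" and p1: "0 < prob A1" and lt: "prob A1 < prob A2" and p2: "prob A2 < 1"
  shows "rhoA A1 = rhoA A2"
proof -
  obtain E1 where E1: "E1 \<in> events" "E1 \<subseteq> A2" "prob E1 = prob A1"
    using adequate_split[OF adq A2 A1] lt by auto
  have rE1: "rhoA E1 = rhoA A1" by (rule rhoA_law[OF E1(1) A1 E1(3)])
  define E2 where "E2 = A2 - E1"
  define E3 where "E3 = space M - A2"
  have A2s: "A2 \<subseteq> space M" using A2 sets.sets_into_space by blast
  have P: "part3 E1 E2 E3" using E1 A2 A2s by (auto simp: part3_def E2_def E3_def)
  have pr1: "prob E1 = prob A1" by (rule E1(3))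
  have pr2: "prob E2 = prob A2 - prob A1" using E1 A2 by (simp add: E2_def finite_measure_Diff)
  have pr3: "prob E3 = 1 - prob A2" using A2 by (simp add: E3_def prob_compl)
  define q1 where "q1 = prob A1"
  define q2 where "q2 = prob A2 - prob A1"
  define q3 where "q3 = 1 - prob A2"
  have q1p: "q1 > 0" and q2p: "q2 > 0" and q3p: "q3 > 0" using p1 lt p2 by (auto simp: q1_def q2_def q3_def)
  define X where "X t = tl 0 t 1 E1 E2 E3" for t
  have XB: "X t \<in> B0 M" for t unfolding X_def by (rule tl_B0[OF P])
  have Xv: "\<And>\<omega>. \<omega> \<in> E1 \<Longrightarrow> X t \<omega> = 0" "\<And>\<omega>. \<omega> \<in> E2 \<Longrightarrow> X t \<omega> = t" "\<And>\<omega>. \<omega> \<in> E3 \<Longrightarrow> X t \<omega> = 1" for t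
    unfolding X_def using tl_1[OF P] tl_2[OF P] tl_3[OF P] by auto
  have Xcases: "\<And>\<omega> Q. \<omega> \<in> space M \<Longrightarrow> (\<omega> \<in> E1 \<Longrightarrow> Q) \<Longrightarrow> (\<omega> \<in> E2 \<Longrightarrow> Q) \<Longrightarrow> (\<omega> \<in> E3 \<Longrightarrow> Q) \<Longrightarrow> Q"
    using part3_cases[OF P] by blast
  have Ev: "E1 \<in> events" "E2 \<in> events" "E3 \<in> events" using P by (auto simp: part3_def)
  have Es: "E1 \<subseteq> space M" "E2 \<subseteq> space M" "E3 \<subseteq> space M" using P by (auto simp: part3_def)
  have lipX: "\<bar>I (X t) - I (X s)\<bar> \<le> \<bar>t - s\<bar>" for t s
  proof (rule I_lip[OF XB XB])
    fix \<omega> assume "\<omega> \<in> space M"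
    then show "\<bar>X t \<omega> - X s \<omega>\<bar> \<le> \<bar>t - s\<bar>" by (rule Xcases) (auto simp: Xv)
  qed
  define f where "f t = I (X t) - t" for t
  have fI: "f t = I (\<lambda>\<omega>. X t \<omega> + (- t))" for t using I_CA[OF XB, of t "- t"] by (simp add: f_def)
  have fcont: "continuous_on UNIV f"
  proof -
    have "2-lipschitz_on UNIV f"
    proof (rule lipschitz_onI)
      fix t s :: real
      have "\<bar>f t - f s\<bar> \<le> \<bar>I (X t) - I (X s)\<bar> + \<bar>t - s\<bar>" by (simp add: f_def)
      also have "\<dots> \<le> 2 * \<bar>t - s\<bar>" using lipX[of t s] by simp
      finally show "dist (f t) (f s) \<le> 2 * dist t s" by (simp add: dist_real_def)
    qed simp
    then show ?thesis by (rule lipschitz_on_continuous_on)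
  qed
  have fstrict: "f t < f s" if ts: "s < t" for s t
  proof -
    have "I (\<lambda>\<omega>. X t \<omega> + (- t)) < I (\<lambda>\<omega>. X s \<omega> + (- s))"
    proof (rule I_strict[OF B0_add[OF XB B0_const] B0_add[OF XB B0_const]])
      fix \<omega> assume "\<omega> \<in> space M"
      then show "X t \<omega> + - t \<le> X s \<omega> + - s" by (rule Xcases) (use ts in \<open>auto simp: Xv\<close>)
    next
      have "E1 \<subseteq> {\<omega>\<in>space M. X t \<omega> + - t < X s \<omega> + - s}" using Es ts by (auto simp: Xv)
      moreover have "{\<omega>\<in>space M. X t \<omega> + - t < X s \<omega> + - s} \<in> events"
      proof -
        have [measurable]: "X t \<in> borel_measurable M" "X s \<in> borel_measurable M" using XB B0_meas by auto
        show ?thesis by measurable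
      qed
      ultimately have "prob E1 \<le> prob {\<omega>\<in>space M. X t \<omega> + - t < X s \<omega> + - s}"
        by (intro finite_measure_mono)
      then show "0 < prob {\<omega>\<in>space M. X t \<omega> + - t < X s \<omega> + - s}" using pr1 p1 by simp
    qed
    then show ?thesis by (simp add: fI)
  qed
  have f0: "f 0 > 0"
  proof -
    have "I (\<lambda>\<omega>. 0) < I (X 0)"
    proof (rule I_strict[OF XB B0_const])
      fix \<omega> assume "\<omega> \<in> space M"
      then show "0 \<le> X 0 \<omega>" by (rule Xcases) (auto simp: Xv)
    next
      have "E3 \<subseteq> {\<omega>\<in>space M. 0 < X 0 \<omega>}" using Es by (auto simp: Xv)
      then have "prob E3 \<le> prob {\<omega>\<in>space M. 0 < X 0 \<omega>}"
        using B0_set_less[of "\<lambda>\<omega>. - X 0 \<omega>" 0] XB by (intro finite_measure_mono) (auto intro!: B0_comp)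
      then show "0 < prob {\<omega>\<in>space M. (0::real) < X 0 \<omega>}" using pr3 p2 by simp
    qed
    then show ?thesis by (simp add: f_def I_zero)
  qed
  have Xlt1: "I (X t) < 1" if "t \<le> 1" for t
  proof -
    have "I (X t) < I (\<lambda>\<omega>. 1)"
    proof (rule I_strict[OF B0_const XB])
      fix \<omega> assume "\<omega> \<in> space M"
      then show "X t \<omega> \<le> 1" by (rule Xcases) (use that in \<open>auto simp: Xv\<close>)
    next
      have "E1 \<subseteq> {\<omega>\<in>space M. X t \<omega> < 1}" using Es by (auto simp: Xv)
      then have "prob E1 \<le> prob {\<omega>\<in>space M. X t \<omega> < 1}"
        using B0_set_less[OF XB, of t 1] by (intro finite_measure_mono) auto
      then show "0 < prob {\<omega>\<in>space M. X t \<omega> < 1}" using pr1 p1 by simp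
    qed
    then show ?thesis by (simp add: I_const)
  qed
  have f1: "f 1 < 0" using Xlt1[of 1] by (simp add: f_def)
  obtain ts where ts: "0 \<le> ts" "ts \<le> 1" "f ts = 0"
    using IVT2'[of f 1 0 0] f0 f1 continuous_on_subset[OF fcont] by force
  have ts0: "0 < ts" using ts f0 by (cases "ts = 0") auto
  have ts1: "ts < 1" using ts f1 by (cases "ts = 1") auto
  have Its: "I (X ts) = ts" using ts by (simp add: f_def)
  have intX: "(\<integral>\<omega>. g (X t \<omega>) \<partial>M) = g 0 * q1 + g t * q2 + g 1 * q3" for g :: "real \<Rightarrow> real" and t
    unfolding X_def tl_integral[OF P] pr1 pr2 pr3 q1_def q2_def q3_def ..
  have R1: "(1 - ts) * q3 = rhoA A1 * (ts * q1)"
  proof -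
    have p1E: "0 < prob E1" "prob E1 < 1" using pr1 p1 lt p2 by auto
    interpret E: axA M I E1 by (rule axA_inst[OF Ev(1) p1E])
    define Z where "Z = (\<lambda>\<omega>. X ts \<omega> + (- ts))"
    have ZB: "Z \<in> B0 M" unfolding Z_def by (intro B0_add XB B0_const)
    have IZ: "I Z = 0" unfolding Z_def using I_CA[OF XB, of ts "- ts"] Its by simp
    have sZ: "{\<omega>\<in>space M. Z \<omega> < 0} = E1"
    proof (intro set_eqI iffI)
      fix \<omega> assume "\<omega> \<in> {\<omega>\<in>space M. Z \<omega> < 0}"
      then have w: "\<omega> \<in> space M" "X ts \<omega> < ts" by (auto simp: Z_def)
      show "\<omega> \<in> E1" by (rule Xcases[OF w(1)]) (use w ts1 in \<open>auto simp: Xv\<close>)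
    next
      fix \<omega> assume "\<omega> \<in> E1" then show "\<omega> \<in> {\<omega>\<in>space M. Z \<omega> < 0}" using Es ts0 by (auto simp: Z_def Xv)
    qed
    have "(\<integral>\<omega>. max (Z \<omega>) 0 \<partial>M) = E.rho * (\<integral>\<omega>. max (- Z \<omega>) 0 \<partial>M)" by (rule E.KL[OF ZB IZ sZ])
    moreover have "(\<integral>\<omega>. max (Z \<omega>) 0 \<partial>M) = (1 - ts) * q3"
      using intX[of "\<lambda>x. max (x + - ts) 0" ts] ts0 ts1 by (simp add: Z_def)
    moreover have "(\<integral>\<omega>. max (- Z \<omega>) 0 \<partial>M) = ts * q1"
      using intX[of "\<lambda>x. max (- (x + - ts)) 0" ts] ts0 ts1 by (simp add: Z_def)
    moreover have "E.rho = rhoA A1" using rhoA_eq[OF Ev(1) p1E] rE1 by simp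
    ultimately show ?thesis by simp
  qed
  have R2: "(1 - I (X t)) * q3 = rhoA A2 * (I (X t) * q1 + (I (X t) - t) * q2)" if t: "0 \<le> t" "t < ts" for t
  proof -
    have pA2: "0 < prob A2" "prob A2 < 1" using p1 lt p2 by auto
    interpret E: axA M I A2 by (rule axA_inst[OF A2 pA2])
    define v where "v = I (X t)"
    have vt: "t < v" using fstrict[OF t(2)] ts by (simp add: f_def v_def)
    have v1: "v < 1" using Xlt1[of t] t ts1 by (simp add: v_def)
    define Z where "Z = (\<lambda>\<omega>. X t \<omega> + (- v))"
    have ZB: "Z \<in> B0 M" unfolding Z_def by (intro B0_add XB B0_const)
    have IZ: "I Z = 0" unfolding Z_def using I_CA[OF XB, of t "- v"] by (simp add: v_def)
    have A2eq: "A2 = E1 \<union> E2" using E1(2) by (auto simp: E2_def)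
    have sZ: "{\<omega>\<in>space M. Z \<omega> < 0} = A2"
    proof (intro set_eqI iffI)
      fix \<omega> assume "\<omega> \<in> {\<omega>\<in>space M. Z \<omega> < 0}"
      then have w: "\<omega> \<in> space M" "X t \<omega> < v" by (auto simp: Z_def)
      show "\<omega> \<in> A2" unfolding A2eq by (rule Xcases[OF w(1)]) (use w v1 in \<open>auto simp: Xv\<close>)
    next
      fix \<omega> assume "\<omega> \<in> A2"
      then have "\<omega> \<in> E1 \<or> \<omega> \<in> E2" using A2eq by simp
      then show "\<omega> \<in> {\<omega>\<in>space M. Z \<omega> < 0}" using Es vt t by (auto simp: Z_def Xv)
    qed
    have "(\<integral>\<omega>. max (Z \<omega>) 0 \<partial>M) = E.rho * (\<integral>\<omega>. max (- Z \<omega>) 0 \<partial>M)" by (rule E.KL[OF ZB IZ sZ])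
    moreover have "(\<integral>\<omega>. max (Z \<omega>) 0 \<partial>M) = (1 - v) * q3"
      using intX[of "\<lambda>x. max (x + - v) 0" t] vt v1 t by (simp add: Z_def)
    moreover have "(\<integral>\<omega>. max (- Z \<omega>) 0 \<partial>M) = v * q1 + (v - t) * q2"
      using intX[of "\<lambda>x. max (- (x + - v)) 0" t] vt v1 t by (simp add: Z_def)
    moreover have "E.rho = rhoA A2" using rhoA_eq[OF A2 pA2] by simp
    ultimately show ?thesis by (simp add: v_def)
  qed
  define K where "K = (1 - ts) * q3 - rhoA A2 * (ts * q1)"
  define C where "C = q3 + rhoA A2 * (q1 + 2 * q2)"
  have r2p: "rhoA A2 > 0" using rhoA_pos[OF A2] p1 lt p2 by auto
  have Cp: "C > 0" using q3p q1p q2p r2p by (simp add: C_def add_pos_nonneg)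
  have Kb: "\<bar>K\<bar> \<le> \<delta> * C" if d: "0 < \<delta>" "\<delta> \<le> ts" for \<delta>
  proof -
    define t where "t = ts - \<delta>"
    have t: "0 \<le> t" "t < ts" using d by (auto simp: t_def)
    define e where "e = I (X t) - ts"
    have e: "\<bar>e\<bar> \<le> \<delta>" using lipX[of t ts] Its d by (simp add: e_def t_def)
    have eq: "(1 - (ts + e)) * q3 = rhoA A2 * ((ts + e) * q1 + (ts + e - t) * q2)" using R2[OF t] by (simp add: e_def)
    define a where "a = q3 + rhoA A2 * q1 + rhoA A2 * q2"
    have ap: "0 < a" using q1p q2p q3p r2p by (simp add: a_def add_pos_nonneg)
    have Ke: "K = e * a + rhoA A2 * \<delta> * q2"
      using eq by (simp add: K_def t_def a_def algebra_simps)
    have Ce: "\<delta> * C = \<delta> * a + rhoA A2 * \<delta> * q2"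
      by (simp add: C_def a_def algebra_simps)
    have e1: "e * a \<le> \<delta> * a" using e ap by (intro mult_right_mono) auto
    have e2: "- \<delta> * a \<le> e * a" using e ap by (intro mult_right_mono) auto
    have pos: "0 \<le> rhoA A2 * \<delta> * q2" using r2p d q2p by simp
    show ?thesis unfolding Ke Ce abs_le_iff using e1 e2 pos by linarith
  qed
  have K0: "K = 0"
  proof (rule ccontr)
    assume "K \<noteq> 0"
    then have Kp: "\<bar>K\<bar> > 0" by simp
    define \<delta> where "\<delta> = min ts (\<bar>K\<bar> / (2 * C))"
    have dp: "0 < \<delta>" "\<delta> \<le> ts" using ts0 Kp Cp by (auto simp: \<delta>_def)
    have "\<delta> * C \<le> (\<bar>K\<bar> / (2 * C)) * C" using Cp by (intro mult_right_mono) (auto simp: \<delta>_def)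
    also have "\<dots> = \<bar>K\<bar> / 2" using Cp by simp
    finally show False using Kb[OF dp] Kp by simp
  qed
  have "rhoA A1 * (ts * q1) = rhoA A2 * (ts * q1)" using R1 K0 by (simp add: K_def)
  then show ?thesis using ts0 q1p by simp
qed

lemma rhoA_const:
  assumes A1: "A1 \<in> events" "0 < prob A1" "prob A1 < 1" and A2: "A2 \<in> events" "0 < prob A2" "prob A2 < 1"
  shows "rhoA A1 = rhoA A2"
proof -
  consider "prob A1 = prob A2" | "prob A1 < prob A2" | "prob A2 < prob A1" by linarith
  then show ?thesis
  proof cases
    case 1 then show ?thesis using rhoA_law A1 A2 by blast
  next
    case 2 then show ?thesis using rhoA_const_lt A1 A2 by blast
  next
    case 3 then show ?thesis using rhoA_const_lt A1 A2 by (metis)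
  qed
qed

end


context axI
begin

lemma forward: "\<exists>\<beta>>(-1). \<forall>X\<in>B0 M. I X = E_beta M \<beta> X"
proof -
  define good where "good A \<longleftrightarrow> A \<in> events \<and> 0 < prob A \<and> prob A < 1" for A
  define \<beta> where "\<beta> = (if \<exists>A. good A then rhoA (SOME A. good A) - 1 else 0)"
  have rg: "rhoA A = 1 + \<beta>" if gA: "good A" for A
  proof -
    have ex: "\<exists>A. good A" using gA by blast
    have gS: "good (SOME A. good A)" using someI_ex[OF ex] .
    have "rhoA A = rhoA (SOME A. good A)" using gA gS unfolding good_def by (intro rhoA_const) auto
    then show ?thesis using ex by (simp add: \<beta>_def)
  qed
  have b: "\<beta> > -1"
  proof (cases "\<exists>A. good A")
    case True
    then obtain A where gA: "good A" by blast
    then have "rhoA A > 0" unfolding good_def by (intro rhoA_pos) auto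
    then show ?thesis using rg[OF gA] by simp
  qed (simp add: \<beta>_def)
  have main: "I X = E_beta M \<beta> X" if X: "X \<in> B0 M" for X
  proof -
    define v where "v = I X"
    define Z where "Z = (\<lambda>\<omega>. X \<omega> + (- v))"
    have ZB: "Z \<in> B0 M" unfolding Z_def by (intro B0_add X B0_const)
    have IZ: "I Z = 0" unfolding Z_def using I_CA[OF X, of "- v"] by (simp add: v_def)
    define A where "A = {\<omega>\<in>space M. Z \<omega> < 0}"
    have Aev: "A \<in> events" unfolding A_def by (rule B0_set_less[OF ZB])
    have Asub: "A \<subseteq> space M" by (auto simp: A_def)
    have mZ1: "max (Z \<omega>) 0 = max (X \<omega> - v) 0" for \<omega> by (simp add: Z_def)
    have mZ2: "max (- Z \<omega>) 0 = max (v - X \<omega>) 0" for \<omega> by (simp add: Z_def)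
    have goal: "ebF M \<beta> X v = 0"
    proof -
      have pA: "0 \<le> prob A" "prob A \<le> 1" by simp_all
      have "prob A = 0 \<or> prob A = 1 \<or> (0 < prob A \<and> prob A < 1)" using pA by linarith
      then consider "prob A = 0" | "prob A = 1" | "good A" using Aev unfolding good_def by blast
      then show ?thesis
      proof cases
        case 3
        interpret E: axA M I A using 3 axA_inst unfolding good_def by blast
        have "(\<integral>\<omega>. max (Z \<omega>) 0 \<partial>M) = E.rho * (\<integral>\<omega>. max (- Z \<omega>) 0 \<partial>M)"
          by (rule E.KL[OF ZB IZ]) (simp add: A_def)
        moreover have "E.rho = 1 + \<beta>" using rhoA_eq rg[OF 3] 3 unfolding good_def by auto
        ultimately show ?thesis unfolding ebF_def mZ1 mZ2 by simp
      next
        case 1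
        define Z' where "Z' = (\<lambda>\<omega>. max (Z \<omega>) 0)"
        have Z'B: "Z' \<in> B0 M" unfolding Z'_def by (rule B0_comp[OF ZB])
        have "I Z = I Z'" by (rule I_ae[OF ZB Z'B Aev 1]) (auto simp: A_def Z'_def)
        then have IZ': "I Z' = 0" using IZ by simp
        have P0: "prob {\<omega>\<in>space M. 0 < Z' \<omega>} = 0"
        proof (rule ccontr)
          assume "prob {\<omega>\<in>space M. 0 < Z' \<omega>} \<noteq> 0"
          then have "prob {\<omega>\<in>space M. 0 < Z' \<omega>} > 0" using measure_nonneg[of M] by (metis less_eq_real_def)
          then have "I (\<lambda>\<omega>. 0) < I Z'"
            by (intro I_strict[OF Z'B B0_const]) (auto simp: Z'_def)
          then show False using IZ' I_zero by simp
        qed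
        have s1: "{\<omega>\<in>space M. 0 < Z' \<omega>} = {\<omega>\<in>space M. v < X \<omega>}" by (auto simp: Z'_def Z_def)
        have s2: "A = {\<omega>\<in>space M. X \<omega> < v}" by (auto simp: A_def Z_def)
        have pv1: "prob {\<omega>\<in>space M. v < X \<omega>} = 0" using P0 s1 by simp
        have pv2: "prob {\<omega>\<in>space M. X \<omega> < v} = 0" using 1 s2 by simp
        have sv1: "{\<omega>\<in>space M. v < X \<omega>} \<in> events" using B0_set_less[of "\<lambda>\<omega>. - X \<omega>" "- v"] B0_comp[OF X, of uminus] by simp
        have sv2: "{\<omega>\<in>space M. X \<omega> < v} \<in> events" by (rule B0_set_less[OF X])
        have i1: "(\<integral>\<omega>. max (X \<omega> - v) 0 \<partial>M) = 0"
        proof -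
          have "(\<integral>\<omega>. max (X \<omega> - v) 0 \<partial>M) = (\<Sum>x\<in>X ` space M. max (x - v) 0 * prob {\<omega>\<in>space M. X \<omega> = x})"
            using B0_integral[OF X, of "\<lambda>x. max (x - v) 0"] by simp
          also have "\<dots> = 0"
          proof (intro sum.neutral ballI)
            fix x assume "x \<in> X ` space M"
            show "max (x - v) 0 * prob {\<omega>\<in>space M. X \<omega> = x} = 0"
            proof (cases "v < x")
              case True
              have "prob {\<omega>\<in>space M. X \<omega> = x} \<le> prob {\<omega>\<in>space M. v < X \<omega>}"
                using True sv1 by (intro finite_measure_mono) auto
              then have "prob {\<omega>\<in>space M. X \<omega> = x} = 0" using pv1 measure_nonneg[of M] by (metis antisym)
              then show ?thesis by simp
            qed simp
          qed
          finally show ?thesis .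
        qed
        have i2: "(\<integral>\<omega>. max (v - X \<omega>) 0 \<partial>M) = 0"
        proof -
          have "(\<integral>\<omega>. max (v - X \<omega>) 0 \<partial>M) = (\<Sum>x\<in>X ` space M. max (v - x) 0 * prob {\<omega>\<in>space M. X \<omega> = x})"
            using B0_integral[OF X, of "\<lambda>x. max (v - x) 0"] by simp
          also have "\<dots> = 0"
          proof (intro sum.neutral ballI)
            fix x assume "x \<in> X ` space M"
            show "max (v - x) 0 * prob {\<omega>\<in>space M. X \<omega> = x} = 0"
            proof (cases "x < v")
              case True
              have "prob {\<omega>\<in>space M. X \<omega> = x} \<le> prob {\<omega>\<in>space M. X \<omega> < v}"
                using True sv2 by (intro finite_measure_mono) auto
              then have "prob {\<omega>\<in>space M. X \<omega> = x} = 0" using pv2 measure_nonneg[of M] by (metis antisym)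
              then show ?thesis by simp
            qed simp
          qed
          finally show ?thesis .
        qed
        show ?thesis unfolding ebF_def i1 i2 by simp
      next
        case 2
        have Ane: "A \<noteq> {}" using 2 by auto
        have finA: "finite (Z ` A)" using B0_fin[OF ZB] Asub by (meson finite_subset image_mono)
        define m where "m = Max (Z ` A)"
        have mneg: "m < 0" using finA Ane by (auto simp: m_def A_def)
        have Zle: "Z \<omega> \<le> m" if "\<omega> \<in> A" for \<omega> using finA that by (simp add: m_def)
        define Z'' where "Z'' = (\<lambda>\<omega>. min (Z \<omega>) m)"
        have Z''B: "Z'' \<in> B0 M" unfolding Z''_def by (rule B0_comp[OF ZB])
        have N: "space M - A \<in> events" "prob (space M - A) = 0" using Aev 2 by (auto simp: prob_compl)
        have "I Z = I Z''" by (rule I_ae[OF ZB Z''B N]) (use Zle in \<open>auto simp: Z''_def min_def\<close>)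
        also have "\<dots> \<le> m" by (rule I_le_const[OF Z''B]) (simp add: Z''_def)
        finally show ?thesis using IZ mneg by simp
      qed
    qed
    have "E_beta M \<beta> X = v" using E_beta_iff[OF X b] goal by blast
    then show ?thesis by (simp add: v_def)
  qed
  show ?thesis using b main by blast
qed

end

theorem theorem10:
  fixes M :: "'a measure" and I :: "('a \<Rightarrow> real) \<Rightarrow> real"
  assumes "prob_space M" and "adequate M"
  shows "(strongly_monotone M I \<and> constant_additive M I \<and>
          positively_homogeneous M I \<and> concordant_additive M I) \<longleftrightarrow>
         (\<exists>\<beta>>(-1). \<forall>X\<in>B0 M. I X = E_beta M \<beta> X)"
proof
  assume H: "strongly_monotone M I \<and> constant_additive M I \<and> positively_homogeneous M I \<and> concordant_additive M I"
  have ax: "axI M I" unfolding axI_def axI_axioms_def using assms H by blast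
  show "\<exists>\<beta>>(-1). \<forall>X\<in>B0 M. I X = E_beta M \<beta> X" by (rule axI.forward[OF ax])
next
  assume "\<exists>\<beta>>(-1). \<forall>X\<in>B0 M. I X = E_beta M \<beta> X"
  then obtain \<beta> where b: "\<beta> > -1" and H: "\<forall>X\<in>B0 M. I X = E_beta M \<beta> X" by blast
  show "strongly_monotone M I \<and> constant_additive M I \<and> positively_homogeneous M I \<and> concordant_additive M I"
    by (rule prob_space.reverse_dir[OF assms(1) b H])
qed

end
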